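(* Let $\alpha,\gamma\in(0,1)$, $f\in C^1[0,1]$ with $f(0)=0$, $h=\dot f$, $D\in C^1[0,1]$ with $D>0$ on $(0,\alpha)$ and $D<0$ on $(\alpha,1)$, $g\in C^0[0,1]$ with $g<0$ on $(0,\gamma)$, $g>0$ on $(\gamma,1)$, $g(0)=g(\gamma)=g(1)=0$, and $q=Dg$. Let $c\in\mathbb R$ and assume one of the following: (a) Problem (P) has a solution and either (i) $\alpha\ne\gamma$, or (ii) $\alpha=\gamma$ and condition (G2) holds; (b) Problem (P') has a solution $z$ with $z(\gamma)=0$, $\alpha<\gamma$, and condition (G2) holds. Then the equation $\rho_t+f(\rho)_x=(D(\rho)\rho_x)_x+g(\rho)$ admits a wavefront with speed $c$ whose profile $\phi$ satisfies $\phi(-\infty)=1$, $\phi(+\infty)=0$.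
   Context: Condition (G2): there are $L>0$ and $\tau\in(0,1)$ with $|g(\phi)|\ge L|\phi-\gamma|^\tau$ in a full neighborhood of $\gamma$. Problem (P): find $z\in C^0[0,1]\cap C^1((0,1)\setminus\{\alpha\})$ with $\dot z=h-c-q/z$ on $(0,\alpha)\cup(\alpha,1)$, $z<0$ on $(0,\alpha)$, $z>0$ on $(\alpha,1)$, $z(0)=z(\alpha)=z(1)=0$. Problem (P'): find $z\in C^0[0,1]\cap C^1((0,1)\setminus\{\alpha,\gamma\})$ with $\dot z=h-c-q/z$ on $(0,\alpha)\cup(\alpha,\gamma)\cup(\gamma,1)$, $z<0$ on $(0,\alpha)$, $z>0$ on $(\alpha,\gamma)\cup(\gamma,1)$, $z(0)=z(\alpha)=z(1)=0$. A wavefront with speed $c$ and profile $\phi$: $\phi\in C(\mathbb R)$ with values in $[0,1]$, differentiable a.e., $D(\phi)\phi'\in L^1_{\rm loc}$, monotone non-constant, with $\int_{\mathbb R}(D(\phi)\phi'-f(\phi)+c\phi)\psi'-g(\phi)\psi\,d\xi=0$ for all $\psi\in C_0^\infty(\mathbb R)$. *)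

theory Defs
  imports "HOL-Analysis.Analysis"
begin

definition C1_01 :: "(real \<Rightarrow> real) \<Rightarrow> (real \<Rightarrow> real) \<Rightarrow> bool" where
  "C1_01 F F' \<longleftrightarrow> (\<forall>x\<in>{0..1}. (F has_real_derivative F' x) (at x within {0..1}))
                   \<and> continuous_on {0..1} F'"

definition C1_ode_on :: "real set \<Rightarrow> (real \<Rightarrow> real) \<Rightarrow> (real \<Rightarrow> real) \<Rightarrow> real \<Rightarrow> (real \<Rightarrow> real) \<Rightarrow> bool" where
  "C1_ode_on S z h c q \<longleftrightarrow> (\<forall>s\<in>S. z differentiable (at s)) \<and> continuous_on S (deriv z)
      \<and> (\<forall>s\<in>S. deriv z s = h s - c - q s / z s)"

definition problem_P :: "(real \<Rightarrow> real) \<Rightarrow> real \<Rightarrow> (real \<Rightarrow> real) \<Rightarrow> real \<Rightarrow> (real \<Rightarrow> real) \<Rightarrow> bool" where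
  "problem_P h c q \<alpha> z \<longleftrightarrow> continuous_on {0..1} z
      \<and> C1_ode_on ({0<..<1} - {\<alpha>}) z h c q
      \<and> (\<forall>s\<in>{0<..<\<alpha>}. z s < 0) \<and> (\<forall>s\<in>{\<alpha><..<1}. z s > 0)
      \<and> z 0 = 0 \<and> z \<alpha> = 0 \<and> z 1 = 0"

definition problem_P' :: "(real \<Rightarrow> real) \<Rightarrow> real \<Rightarrow> (real \<Rightarrow> real) \<Rightarrow> real \<Rightarrow> real \<Rightarrow> (real \<Rightarrow> real) \<Rightarrow> bool" where
  "problem_P' h c q \<alpha> \<gamma> z \<longleftrightarrow> continuous_on {0..1} z
      \<and> C1_ode_on ({0<..<1} - {\<alpha>, \<gamma>}) z h c q
      \<and> (\<forall>s\<in>{0<..<\<alpha>}. z s < 0) \<and> (\<forall>s\<in>({\<alpha><..<\<gamma>} \<union> {\<gamma><..<1}). z s > 0)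
      \<and> z 0 = 0 \<and> z \<alpha> = 0 \<and> z 1 = 0"

definition cond_G2 :: "(real \<Rightarrow> real) \<Rightarrow> real \<Rightarrow> bool" where
  "cond_G2 g \<gamma> \<longleftrightarrow> (\<exists>L \<tau> \<delta>. L > 0 \<and> 0 < \<tau> \<and> \<tau> < 1 \<and> \<delta> > 0 \<and>
      (\<forall>u. \<bar>u - \<gamma>\<bar> < \<delta> \<longrightarrow> \<bar>g u\<bar> \<ge> L * \<bar>u - \<gamma>\<bar> powr \<tau>))"

definition test_fun :: "(real \<Rightarrow> real) \<Rightarrow> bool" where
  "test_fun \<psi> \<longleftrightarrow> (\<forall>k x. (deriv ^^ k) \<psi> differentiable (at x))
      \<and> (\<exists>R. \<forall>x. R < \<bar>x\<bar> \<longrightarrow> \<psi> x = 0)"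

text \<open>Wavefront (weak sense) with speed c and profile \<phi> for
  rho_t + f(rho)_x = (D(rho) rho_x)_x + g(rho). The a.e. derivative of \<phi> is deriv \<phi>.\<close>
definition wavefront :: "(real \<Rightarrow> real) \<Rightarrow> (real \<Rightarrow> real) \<Rightarrow> (real \<Rightarrow> real) \<Rightarrow> real \<Rightarrow> (real \<Rightarrow> real) \<Rightarrow> bool" where
  "wavefront f D g c \<phi> \<longleftrightarrow>
      continuous_on UNIV \<phi> \<and> (\<forall>\<xi>. \<phi> \<xi> \<in> {0..1})
    \<and> (AE \<xi> in lebesgue. \<phi> differentiable (at \<xi>))
    \<and> (\<forall>a b. set_integrable lebesgue {a..b} (\<lambda>\<xi>. D (\<phi> \<xi>) * deriv \<phi> \<xi>))
    \<and> (mono \<phi> \<or> antimono \<phi>) \<and> \<not> (\<exists>k. \<forall>\<xi>. \<phi> \<xi> = k)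
    \<and> (\<forall>\<psi>. test_fun \<psi> \<longrightarrow>
         (let F = (\<lambda>\<xi>. (D (\<phi> \<xi>) * deriv \<phi> \<xi> - f (\<phi> \<xi>) + c * \<phi> \<xi>) * deriv \<psi> \<xi> - g (\<phi> \<xi>) * \<psi> \<xi>)
          in integrable lebesgue F \<and> (\<integral>\<xi>. F \<xi> \<partial>lebesgue) = 0))"

end

theory Submission
  imports Defs
begin


lemma Ybound:
  fixes Y v Q Q' :: "real \<Rightarrow> real"
  assumes d: "0 < \<delta>"
    and dY: "\<And>t. 0<t \<Longrightarrow> t<\<delta> \<Longrightarrow> (Y has_real_derivative v t) (at t)"
    and vpos: "\<And>t. 0<t \<Longrightarrow> t<\<delta> \<Longrightarrow> v t \<ge> 0"
    and dQ: "\<And>t. 0<t \<Longrightarrow> t<\<delta> \<Longrightarrow> (Q has_real_derivative Q' t) (at t)"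
    and Qv: "\<And>t. 0<t \<Longrightarrow> t<\<delta> \<Longrightarrow> Q' t \<ge> v t"
    and Qlow: "\<And>t. 0<t \<Longrightarrow> t<\<delta> \<Longrightarrow> Q t \<ge> Cq"
  shows "\<exists>B. \<forall>t\<in>{0<..<\<delta>}. B \<le> Y t"
proof -
  define t1 where "t1 = \<delta>/2"
  have t1: "0 < t1" "t1 < \<delta>" using d by (auto simp: t1_def)
  have "min (Y t1) (Y t1 - Q t1 + Cq) \<le> Y t" if t: "0<t" "t<\<delta>" for t
  proof (cases "t \<le> t1")
    case True
    have "(\<lambda>x. Q x - Y x) t \<le> (\<lambda>x. Q x - Y x) t1"
    proof (rule DERIV_nonneg_imp_nondecreasing[of t t1 "\<lambda>x. Q x - Y x", OF True])
      fix x assume x: "t \<le> x" "x \<le> t1"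
      then have x': "0<x" "x<\<delta>" using t t1 by auto
      show "\<exists>y. ((\<lambda>x. Q x - Y x) has_real_derivative y) (at x) \<and> 0 \<le> y"
        using DERIV_diff[OF dQ[OF x'] dY[OF x']] Qv[OF x'] by auto
    qed
    then show ?thesis using Qlow[OF t] by simp
  next
    case False
    have "Y t1 \<le> Y t"
    proof (rule DERIV_nonneg_imp_nondecreasing[of t1 t Y])
      show "t1 \<le> t" using False by simp
      fix x assume x: "t1 \<le> x" "x \<le> t"
      then have x': "0<x" "x<\<delta>" using t t1 by auto
      show "\<exists>y. (Y has_real_derivative y) (at x) \<and> 0 \<le> y"
        using dY[OF x'] vpos[OF x'] by auto
    qed
    then show ?thesis by simp
  qed
  then show ?thesis by (intro exI[where x="min (Y t1) (Y t1 - Q t1 + Cq)"]) auto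
qed

lemma last_zero:
  fixes p :: "real \<Rightarrow> real"
  assumes ab: "a \<le> b" and cp: "continuous_on {a..b} p" and pa: "p a \<le> 0" and pb: "p b > 0"
  shows "\<exists>t0\<in>{a..<b}. p t0 \<le> 0 \<and> (\<forall>t\<in>{t0<..b}. p t > 0)"
proof -
  define S where "S = {t\<in>{a..b}. p t \<le> 0}"
  have "closed S" unfolding S_def
    using continuous_on_closed_Collect_le[OF cp continuous_on_const closed_atLeastAtMost, of 0] by simp
  moreover have "bounded S" unfolding S_def by (rule bounded_subset[of "{a..b}"]) auto
  ultimately have "compact S" by (simp add: compact_eq_bounded_closed)
  moreover have "S \<noteq> {}" using ab pa by (auto simp: S_def)
  ultimately obtain t0 where t0: "t0 \<in> S" "\<And>t. t \<in> S \<Longrightarrow> t \<le> t0"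
    using compact_attains_sup by metis
  have "t0 \<noteq> b" using t0(1) pb by (auto simp: S_def)
  then have "t0 \<in> {a..<b}" using t0(1) by (auto simp: S_def)
  moreover have "\<forall>t\<in>{t0<..b}. p t > 0"
  proof
    fix t assume t: "t \<in> {t0<..b}"
    show "p t > 0"
    proof (rule ccontr)
      assume "\<not> p t > 0"
      then have "t \<in> S" using t t0(1) by (auto simp: S_def)
      then show False using t0(2) t by force
    qed
  qed
  ultimately show ?thesis using t0(1) by (auto simp: S_def)
qed

lemma linbound:
  fixes \<zeta> \<zeta>d :: "real \<Rightarrow> real"
  assumes d: "0 < \<delta>" and K: "K \<ge> 0" and B: "B \<ge> 0"
    and cz: "continuous_on {0..\<delta>} \<zeta>" and z0: "\<zeta> 0 = 0"
    and zpos: "\<And>t. 0<t \<Longrightarrow> t<\<delta> \<Longrightarrow> \<zeta> t > 0"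
    and dz: "\<And>t. 0<t \<Longrightarrow> t<\<delta> \<Longrightarrow> (\<zeta> has_real_derivative \<zeta>d t) (at t)"
    and zb: "\<And>t. 0<t \<Longrightarrow> t<\<delta> \<Longrightarrow> \<zeta>d t \<le> K + B * t / \<zeta> t"
    and t1: "0 \<le> t1" "t1 < \<delta>"
  shows "\<zeta> t1 \<le> (K + B + 1) * t1"
proof (rule ccontr)
  define C where "C = K + B + 1"
  have C1: "C \<ge> 1" using K B by (simp add: C_def)
  assume nt: "\<not> \<zeta> t1 \<le> (K + B + 1) * t1"
  then have nt': "\<zeta> t1 - C * t1 > 0" by (auto simp: C_def)
  have cp: "continuous_on {0..t1} (\<lambda>t. \<zeta> t - C * t)"
    by (intro continuous_intros continuous_on_subset[OF cz]) (use t1 in auto)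
  obtain t0 where t0: "t0 \<in> {0..<t1}" "\<zeta> t0 - C * t0 \<le> 0"
      and pos: "\<And>t. t\<in>{t0<..t1} \<Longrightarrow> \<zeta> t - C * t > 0"
    using last_zero[OF _ cp _ nt'] t1 z0 by auto
  have "(\<lambda>t. \<zeta> t - C * t) t1 \<le> (\<lambda>t. \<zeta> t - C * t) t0"
  proof (rule DERIV_nonpos_imp_decreasing_open[of t0 t1 "\<lambda>t. \<zeta> t - C * t"])
    show "t0 \<le> t1" using t0 by simp
    show "continuous_on {t0..t1} (\<lambda>t. \<zeta> t - C * t)"
      by (rule continuous_on_subset[OF cp]) (use t0 in auto)
    fix x assume x: "t0 < x" "x < t1"
    have x': "0 < x" "x < \<delta>" using x t0 t1 by auto
    have zx: "\<zeta> x > C * x" using pos[of x] x by auto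
    have zp: "\<zeta> x > 0" using zpos[OF x'] .
    have "B * x / \<zeta> x \<le> B * x / (C * x)"
      using zx x' B C1 zp by (intro divide_left_mono mult_nonneg_nonneg mult_pos_pos) auto
    also have "\<dots> = B / C" using x' by simp
    also have "\<dots> \<le> B" using C1 B by (simp add: divide_le_eq mult_le_cancel_left1 mult_le_cancel_left)
    finally have "\<zeta>d x \<le> K + B" using zb[OF x'] by simp
    then have "\<zeta>d x - C \<le> 0" by (simp add: C_def)
    moreover have "((\<lambda>t. \<zeta> t - C * t) has_real_derivative \<zeta>d x - C) (at x)"
      using dz[OF x'] by (auto intro!: derivative_eq_intros)
    ultimately show "\<exists>y. ((\<lambda>t. \<zeta> t - C * t) has_real_derivative y) (at x) \<and> y \<le> 0"
      by blast
  qed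
  then show False using t0 nt' by simp
qed

lemma powr_le1: "0 \<le> (x::real) \<Longrightarrow> x \<le> 1 \<Longrightarrow> 0 \<le> a \<Longrightarrow> x powr a \<le> 1"
  by (metis powr_mono2 powr_one_eq_one)

lemma local_alpha:
  fixes \<zeta> Hk k gt v Y :: "real \<Rightarrow> real"
  assumes d: "0 < \<delta>" "\<delta> \<le> 1" and tau: "0 < \<tau>" "\<tau> < 1" and L: "L > 0"
    and e: "e = 1 \<or> e = -1" and K: "K \<ge> 0" and B: "B \<ge> 0"
    and cz: "continuous_on {0..\<delta>} \<zeta>" and z0: "\<zeta> 0 = 0"
    and zpos: "\<And>t. 0<t \<Longrightarrow> t<\<delta> \<Longrightarrow> \<zeta> t > 0"
    and cH: "continuous_on {0..\<delta>} Hk"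
    and dH: "\<And>t. 0<t \<Longrightarrow> t<\<delta> \<Longrightarrow> (Hk has_real_derivative k t) (at t)"
    and kb: "\<And>t. 0<t \<Longrightarrow> t<\<delta> \<Longrightarrow> \<bar>k t\<bar> \<le> K"
    and dz: "\<And>t. 0<t \<Longrightarrow> t<\<delta> \<Longrightarrow> (\<zeta> has_real_derivative (k t + gt t * v t)) (at t)"
    and vpos: "\<And>t. 0<t \<Longrightarrow> t<\<delta> \<Longrightarrow> v t \<ge> 0"
    and gvb: "\<And>t. 0<t \<Longrightarrow> t<\<delta> \<Longrightarrow> \<bar>gt t\<bar> * v t \<le> B * t / \<zeta> t"
    and glow: "\<And>t. 0<t \<Longrightarrow> t<\<delta> \<Longrightarrow> e * gt t \<ge> L * t powr \<tau>"
    and dY: "\<And>t. 0<t \<Longrightarrow> t<\<delta> \<Longrightarrow> (Y has_real_derivative v t) (at t)"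
  shows "\<exists>Bd. \<forall>t\<in>{0<..<\<delta>}. Bd \<le> Y t"
proof -
  define C where "C = K + B + 1"
  have zlin: "\<zeta> t \<le> C * t" if "0 \<le> t" "t < \<delta>" for t
    unfolding C_def
  proof (rule linbound[OF d(1) K B cz z0 zpos dz _ that])
    fix t assume t: "0 < t" "t < \<delta>"
    have "gt t * v t \<le> \<bar>gt t\<bar> * v t" using vpos[OF t] by (simp add: mult_right_mono)
    then show "k t + gt t * v t \<le> K + B * t / \<zeta> t" using gvb[OF t] kb[OF t] by linarith
  qed
  have Hb: "\<bar>Hk t - Hk 0\<bar> \<le> K * t" if t: "0 < t" "t < \<delta>" for t
  proof -
    have cLt: "continuous_on {0..t} Hk" by (rule continuous_on_subset[OF cH]) (use t in auto)
    have "(\<lambda>x. Hk x - K * x) t \<le> (\<lambda>x. Hk x - K * x) 0"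
    proof (rule DERIV_nonpos_imp_decreasing_open[of 0 t "\<lambda>x. Hk x - K * x"])
      show "0 \<le> t" using t by simp
      show "continuous_on {0..t} (\<lambda>x. Hk x - K * x)" by (intro continuous_intros cLt)
      fix x assume x: "0 < x" "x < t"
      then have x': "0 < x" "x < \<delta>" using t by auto
      have "((\<lambda>x. Hk x - K * x) has_real_derivative k x - K) (at x)"
        using dH[OF x'] by (auto intro!: derivative_eq_intros)
      moreover have "k x - K \<le> 0" using kb[OF x'] by linarith
      ultimately show "\<exists>y. ((\<lambda>x. Hk x - K * x) has_real_derivative y) (at x) \<and> y \<le> 0" by blast
    qed
    moreover have "(\<lambda>x. Hk x + K * x) 0 \<le> (\<lambda>x. Hk x + K * x) t"
    proof (rule DERIV_nonneg_imp_increasing_open[of 0 t "\<lambda>x. Hk x + K * x"])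
      show "0 \<le> t" using t by simp
      show "continuous_on {0..t} (\<lambda>x. Hk x + K * x)" by (intro continuous_intros cLt)
      fix x assume x: "0 < x" "x < t"
      then have x': "0 < x" "x < \<delta>" using t by auto
      have "((\<lambda>x. Hk x + K * x) has_real_derivative k x + K) (at x)"
        using dH[OF x'] by (auto intro!: derivative_eq_intros)
      moreover have "k x + K \<ge> 0" using kb[OF x'] by linarith
      ultimately show "\<exists>y. ((\<lambda>x. Hk x + K * x) has_real_derivative y) (at x) \<and> y \<ge> 0" by blast
    qed
    ultimately show ?thesis by simp
  qed
  define C' where "C' = C + K"
  have C'pos: "C' \<ge> 0" using K B by (simp add: C'_def C_def)
  define p where "p t = e * (\<zeta> t - Hk t + Hk 0)" for t
  have pb: "p t \<le> C' * t" if t: "0 < t" "t < \<delta>" for t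
  proof -
    have "\<bar>p t\<bar> = \<bar>\<zeta> t - Hk t + Hk 0\<bar>" using e by (auto simp: p_def abs_mult)
    also have "\<dots> \<le> \<bar>\<zeta> t\<bar> + \<bar>Hk t - Hk 0\<bar>" by linarith
    also have "\<dots> \<le> C * t + K * t" using zlin[of t] zpos[OF t] Hb[OF t] t by auto
    finally show ?thesis by (simp add: C'_def algebra_simps)
  qed
  define c1 where "c1 = \<tau> * C' / (L * (1 - \<tau>))"
  have c1pos: "c1 \<ge> 0" using tau L C'pos by (simp add: c1_def)
  define Q where "Q t = p t / L * t powr (-\<tau>) + c1 * t powr (1 - \<tau>)" for t
  define Q' where "Q' t = e * (gt t * v t) / L * t powr (-\<tau>) + p t / L * (-\<tau> * t powr (-\<tau> - 1))
      + c1 * ((1 - \<tau>) * t powr (1 - \<tau> - 1))" for t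
  show ?thesis
  proof (rule Ybound[OF d(1) dY vpos])
    fix t assume t: "0 < t" "t < \<delta>"
    have dp: "(p has_real_derivative e * (gt t * v t)) (at t)"
    proof -
      have "((\<lambda>t. e * (\<zeta> t - Hk t + Hk 0)) has_real_derivative e * ((k t + gt t * v t) - k t)) (at t)"
        using dz[OF t] dH[OF t] by (auto intro!: derivative_eq_intros)
      then show ?thesis by (simp add: p_def[abs_def])
    qed
    show "(Q has_real_derivative Q' t) (at t)"
      unfolding Q_def[abs_def] Q'_def
      using t dp L by (auto intro!: derivative_eq_intros) (auto simp: field_simps)
    define P where "P = t powr (-\<tau>)"
    have Ppos: "P > 0" using t by (simp add: P_def)
    have e1: "t powr (-\<tau> - 1) = P / t" using t
      by (simp add: P_def powr_diff)
    have e2: "t powr (1 - \<tau> - 1) = P" by (simp add: P_def)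
    have e3: "t powr \<tau> * P = 1" using t by (simp add: P_def powr_minus)
    have T1: "e * (gt t * v t) / L * P \<ge> v t"
    proof -
      have "e * (gt t * v t) = (e * gt t) * v t" by simp
      also have "\<dots> \<ge> (L * t powr \<tau>) * v t" using glow[OF t] vpos[OF t] by (intro mult_right_mono) auto
      finally have "e * (gt t * v t) / L * P \<ge> (L * t powr \<tau>) * v t / L * P"
        using Ppos L by (intro mult_right_mono divide_right_mono) auto
      also have "(L * t powr \<tau>) * v t / L * P = v t * (t powr \<tau> * P)" using L by simp
      finally show ?thesis using e3 by simp
    qed
    have T2: "p t / L * (-\<tau> * (P / t)) \<ge> - (\<tau> * C' * P / L)"
    proof -
      have "p t * (\<tau> * P / t) \<le> C' * t * (\<tau> * P / t)"
        using pb[OF t] tau Ppos t by (intro mult_right_mono) auto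
      also have "\<dots> = \<tau> * C' * P" using t by simp
      finally have "p t * (\<tau> * P / t) / L \<le> \<tau> * C' * P / L" using L by (intro divide_right_mono) auto
      then show ?thesis by (simp add: algebra_simps)
    qed
    have T3: "c1 * ((1 - \<tau>) * P) = \<tau> * C' * P / L" using tau L by (simp add: c1_def field_simps)
    show "v t \<le> Q' t" unfolding Q'_def e1 e2 P_def[symmetric] using T1 T2 T3 by linarith
  next
    fix t assume t: "0 < t" "t < \<delta>"
    have tle: "t \<le> 1" using t d by simp
    have "p t / L * t powr (-\<tau>) \<ge> - (C' * t / L * t powr (-\<tau>))"
    proof -
      have "- (C' * t) \<le> p t"
      proof -
        have "\<bar>p t\<bar> \<le> C' * t"
        proof -
          have "\<bar>p t\<bar> = \<bar>\<zeta> t - Hk t + Hk 0\<bar>" using e by (auto simp: p_def abs_mult)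
          also have "\<dots> \<le> \<bar>\<zeta> t\<bar> + \<bar>Hk t - Hk 0\<bar>" by linarith
          also have "\<dots> \<le> C * t + K * t" using zlin[of t] zpos[OF t] Hb[OF t] t by auto
          finally show ?thesis by (simp add: C'_def algebra_simps)
        qed
        then show ?thesis by linarith
      qed
      then have "- (C' * t) / L * t powr (-\<tau>) \<le> p t / L * t powr (-\<tau>)"
        using L by (intro mult_right_mono divide_right_mono) auto
      then show ?thesis by simp
    qed
    moreover have "C' * t / L * t powr (-\<tau>) = C' / L * t powr (1 - \<tau>)"
      using t by (simp add: powr_diff powr_minus field_simps)
    moreover have "C' / L * t powr (1 - \<tau>) \<le> C' / L"
    proof -
      have "C' * t powr (1 - \<tau>) \<le> C'"
        using powr_le1[of t "1-\<tau>"] t tle tau C'pos by (simp add: mult_left_le)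
      then show ?thesis using L by (simp add: divide_right_mono)
    qed
    moreover have "c1 * t powr (1 - \<tau>) \<ge> 0" using c1pos by simp
    ultimately show "- (C' / L) \<le> Q t" unfolding Q_def by linarith
  qed
qed

lemma local_gamma:
  fixes \<zeta> \<zeta>d v Y :: "real \<Rightarrow> real"
  assumes d: "0 < \<delta>" "\<delta> \<le> 1" and tau: "0 < \<tau>" "\<tau> < 1" and cL: "cL > 0"
    and K: "K \<ge> 0" and M: "M \<ge> 0"
    and cz: "continuous_on {0..\<delta>} \<zeta>" and z0: "\<zeta> 0 = 0"
    and zpos: "\<And>t. 0<t \<Longrightarrow> t<\<delta> \<Longrightarrow> \<zeta> t > 0"
    and dz: "\<And>t. 0<t \<Longrightarrow> t<\<delta> \<Longrightarrow> (\<zeta> has_real_derivative \<zeta>d t) (at t)"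
    and zlow: "\<And>t. 0<t \<Longrightarrow> t<\<delta> \<Longrightarrow> \<zeta>d t \<ge> - K + cL * t powr \<tau> / \<zeta> t"
    and vpos: "\<And>t. 0<t \<Longrightarrow> t<\<delta> \<Longrightarrow> v t \<ge> 0"
    and vb: "\<And>t. 0<t \<Longrightarrow> t<\<delta> \<Longrightarrow> v t \<le> M / \<zeta> t"
    and dY: "\<And>t. 0<t \<Longrightarrow> t<\<delta> \<Longrightarrow> (Y has_real_derivative v t) (at t)"
  shows "\<exists>Bd. \<forall>t\<in>{0<..<\<delta>}. Bd \<le> Y t"
proof -
  define \<beta> where "\<beta> = (1 + \<tau>) / 2"
  have beta: "0 < \<beta>" "\<beta> < 1" "\<tau> - \<beta> = \<beta> - 1" using tau by (auto simp: \<beta>_def field_simps)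
  define m where "m = min 1 (cL / (K + 1))"
  have m: "0 < m" "m \<le> 1" "cL / m \<ge> K + 1"
  proof -
    show "0 < m" "m \<le> 1" using cL K by (auto simp: m_def)
    show "cL / m \<ge> K + 1"
    proof (cases "1 \<le> cL / (K + 1)")
      case True
      then show ?thesis using K by (simp add: m_def field_simps)
    next
      case False
      then have "m = cL / (K + 1)" by (simp add: m_def)
      then show ?thesis using cL K by simp
    qed
  qed
  have low: "\<zeta> t \<ge> m * t powr \<beta>" if t1: "0 < t" "t < \<delta>" for t
  proof (rule ccontr)
    assume "\<not> m * t powr \<beta> \<le> \<zeta> t"
    then have pt1: "m * t powr \<beta> - \<zeta> t > 0" by simp
    have cp: "continuous_on {0..t} (\<lambda>x. m * x powr \<beta> - \<zeta> x)"
      by (intro continuous_intros continuous_on_subset[OF cz] continuous_on_powr')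
        (use t1 beta in auto)
    obtain t0 where t0: "t0 \<in> {0..<t}" "m * t0 powr \<beta> - \<zeta> t0 \<le> 0"
      and pos: "\<And>x. x\<in>{t0<..t} \<Longrightarrow> m * x powr \<beta> - \<zeta> x > 0"
      using last_zero[OF _ cp _ pt1] t1 z0 by auto
    have "(\<lambda>x. m * x powr \<beta> - \<zeta> x) t \<le> (\<lambda>x. m * x powr \<beta> - \<zeta> x) t0"
    proof (rule DERIV_nonpos_imp_decreasing_open[of t0 t "\<lambda>x. m * x powr \<beta> - \<zeta> x"])
      show "t0 \<le> t" using t0 by simp
      show "continuous_on {t0..t} (\<lambda>x. m * x powr \<beta> - \<zeta> x)"
        by (rule continuous_on_subset[OF cp]) (use t0 in auto)
      fix x assume x: "t0 < x" "x < t"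
      have x': "0 < x" "x < \<delta>" using x t0 t1 by auto
      have xle: "x \<le> 1" using x' d by simp
      have zx: "\<zeta> x < m * x powr \<beta>" using pos[of x] x by auto
      have zp: "\<zeta> x > 0" using zpos[OF x'] .
      have "cL * x powr \<tau> / \<zeta> x \<ge> cL * x powr \<tau> / (m * x powr \<beta>)"
        using zx zp cL x' m by (intro divide_left_mono mult_pos_pos) auto
      also have "cL * x powr \<tau> / (m * x powr \<beta>) = (cL / m) * x powr (\<beta> - 1)"
      proof -
        have "x powr \<tau> = x powr \<beta> * x powr (\<beta> - 1)"
          using beta(3) by (simp add: powr_add[symmetric])
        then show ?thesis using x' m by (simp add: field_simps)
      qed
      finally have A: "\<zeta>d x \<ge> - K + (cL / m) * x powr (\<beta> - 1)" using zlow[OF x'] by linarith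
      have P1: "x powr (\<beta> - 1) \<ge> 1"
      proof -
        have "x powr (1 - \<beta>) \<le> 1" using powr_le1[of x "1 - \<beta>"] x' xle beta by simp
        moreover have "x powr (1 - \<beta>) > 0" using x' by simp
        moreover have "x powr (\<beta> - 1) = 1 / x powr (1 - \<beta>)"
          using x' by (simp add: powr_minus_divide[symmetric])
        ultimately show ?thesis by simp
      qed
      have "m * \<beta> \<le> 1" using m beta by (simp add: mult_le_one)
      then have "(m * \<beta> - cL / m) * x powr (\<beta> - 1) \<le> (- K) * x powr (\<beta> - 1)"
        using m by (intro mult_right_mono) auto
      also have "\<dots> \<le> - K" using P1 K by (simp add: mult_le_cancel_left1)
      finally have B: "(m * \<beta> - cL / m) * x powr (\<beta> - 1) \<le> - K" .
      have "((\<lambda>x. m * x powr \<beta> - \<zeta> x) has_real_derivative m * (\<beta> * x powr (\<beta> - 1)) - \<zeta>d x) (at x)"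
        using x' dz[OF x'] by (auto intro!: derivative_eq_intros)
      moreover have "m * (\<beta> * x powr (\<beta> - 1)) - \<zeta>d x \<le> 0"
        using A B by (simp add: algebra_simps)
      ultimately show "\<exists>y. ((\<lambda>x. m * x powr \<beta> - \<zeta> x) has_real_derivative y) (at x) \<and> y \<le> 0"
        by blast
    qed
    then show False using t0 pt1 by simp
  qed
  define Q where "Q t = M / m * t powr (1 - \<beta>) / (1 - \<beta>)" for t
  show ?thesis
  proof (rule Ybound[OF d(1) dY vpos, of Q "\<lambda>t. M / m * t powr (- \<beta>)" 0])
    fix t assume t: "0 < t" "t < \<delta>"
    show "(Q has_real_derivative M / m * t powr (- \<beta>)) (at t)"
    proof -
      have "((\<lambda>t. t powr (1-\<beta>)) has_real_derivative (1-\<beta>) * t powr (1-\<beta>-1)) (at t)"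
        by (rule has_real_derivative_powr) (use t in auto)
      then have "((\<lambda>t. M / m * t powr (1 - \<beta>) / (1 - \<beta>)) has_real_derivative
          M / m * ((1-\<beta>) * t powr (1-\<beta>-1)) / (1 - \<beta>)) (at t)"
        by (intro DERIV_cdivide DERIV_cmult)
      moreover have "M / m * ((1-\<beta>) * t powr (1-\<beta>-1)) / (1 - \<beta>) = M / m * t powr (- \<beta>)"
        using beta by simp
      ultimately show ?thesis unfolding Q_def[abs_def] by simp
    qed
    have "v t \<le> M / \<zeta> t" by (rule vb[OF t])
    also have "\<dots> \<le> M / (m * t powr \<beta>)"
      using low[OF t] M m t zpos[OF t] by (intro divide_left_mono mult_pos_pos) auto
    also have "\<dots> = M / m * t powr (- \<beta>)" by (simp add: powr_minus field_simps)
    finally show "v t \<le> M / m * t powr (- \<beta>)" .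
    show "0 \<le> Q t" unfolding Q_def using M m beta by simp
  qed
qed



definition goodX :: "real \<Rightarrow> real \<Rightarrow> real set \<Rightarrow> (real \<Rightarrow> real) \<Rightarrow> (real \<Rightarrow> real) \<Rightarrow> bool" where
  "goodX a b E rr X \<longleftrightarrow> finite E \<and> continuous_on {a<..<b} X
     \<and> (\<forall>x\<in>{a<..<b}. \<forall>y\<in>{a<..<b}. x < y \<longrightarrow> X y < X x)
     \<and> (\<forall>u\<in>{a<..<b} - E. (X has_real_derivative rr u) (at u))"

lemma antideriv_good:
  fixes rr :: "real \<Rightarrow> real"
  assumes ab: "a < b" and c: "\<And>x. a < x \<Longrightarrow> x < b \<Longrightarrow> isCont rr x"
    and neg: "\<And>x. a < x \<Longrightarrow> x < b \<Longrightarrow> rr x < 0"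
  shows "\<exists>X. goodX a b {} rr X"
proof -
  obtain F where F: "\<And>x. a < x \<Longrightarrow> x < b \<Longrightarrow> (F has_vector_derivative rr x) (at x)"
    using einterval_antiderivative[of "ereal a" "ereal b" rr] ab c by auto
  then have F': "\<And>x. a < x \<Longrightarrow> x < b \<Longrightarrow> (F has_real_derivative rr x) (at x)"
    by (simp add: has_real_derivative_iff_has_vector_derivative)
  have "continuous_on {a<..<b} F"
    using F' by (subst continuous_on_eq_continuous_at) (auto intro: DERIV_isCont[OF F'])
  moreover have "\<forall>x\<in>{a<..<b}. \<forall>y\<in>{a<..<b}. x < y \<longrightarrow> F y < F x"
  proof (intro ballI impI)
    fix x y assume xy: "x \<in> {a<..<b}" "y \<in> {a<..<b}" "x < y"
    show "F y < F x"
      by (rule DERIV_neg_imp_decreasing[OF xy(3)]) (use xy F' neg in force)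
  qed
  ultimately show ?thesis using F' unfolding goodX_def by (intro exI[of _ F]) auto
qed

lemma bdd_below_from_local:
  assumes g: "goodX a m E rr X1" and d: "0 < \<delta>" "\<delta> \<le> m - a"
    and loc: "\<forall>t\<in>{0<..<\<delta>}. Bd \<le> X1 (m - t)"
  shows "\<exists>B. \<forall>u\<in>{a<..<m}. B \<le> X1 u"
proof -
  have dec: "\<And>x y. x\<in>{a<..<m} \<Longrightarrow> y\<in>{a<..<m} \<Longrightarrow> x < y \<Longrightarrow> X1 y < X1 x"
    using g by (auto simp: goodX_def)
  have "min Bd (X1 (m - \<delta>/2)) \<le> X1 u" if u: "u \<in> {a<..<m}" for u
  proof (cases "u \<le> m - \<delta>/2")
    case True
    then have "X1 (m - \<delta>/2) \<le> X1 u" using dec[of u "m - \<delta>/2"] u d by (cases "u = m - \<delta>/2") auto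
    then show ?thesis by simp
  next
    case False
    then have "m - u \<in> {0<..<\<delta>}" using u d by auto
    then have "Bd \<le> X1 (m - (m - u))" using loc by blast
    then show ?thesis by simp
  qed
  then show ?thesis by blast
qed

lemma bdd_above_from_local:
  assumes g: "goodX m b E rr X2" and d: "0 < \<delta>" "\<delta> \<le> b - m"
    and loc: "\<forall>t\<in>{0<..<\<delta>}. Bd \<le> - X2 (m + t)"
  shows "\<exists>B. \<forall>u\<in>{m<..<b}. X2 u \<le> B"
proof -
  have dec: "\<And>x y. x\<in>{m<..<b} \<Longrightarrow> y\<in>{m<..<b} \<Longrightarrow> x < y \<Longrightarrow> X2 y < X2 x"
    using g by (auto simp: goodX_def)
  have "X2 u \<le> max (- Bd) (X2 (m + \<delta>/2))" if u: "u \<in> {m<..<b}" for u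
  proof (cases "u \<ge> m + \<delta>/2")
    case True
    then have "X2 u \<le> X2 (m + \<delta>/2)" using dec[of "m + \<delta>/2" u] u d by (cases "u = m + \<delta>/2") auto
    then show ?thesis by simp
  next
    case False
    then have "u - m \<in> {0<..<\<delta>}" using u d by auto
    then have "Bd \<le> - X2 (m + (u - m))" using loc by blast
    then show ?thesis by simp
  qed
  then show ?thesis by blast
qed

lemma glue:
  fixes X1 X2 rr :: "real \<Rightarrow> real"
  assumes am: "a < m" and mb: "m < b"
    and g1: "goodX a m E1 rr X1" and g2: "goodX m b E2 rr X2"
    and b1: "\<exists>B. \<forall>u\<in>{a<..<m}. B \<le> X1 u" and b2: "\<exists>B. \<forall>u\<in>{m<..<b}. X2 u \<le> B"
  shows "\<exists>X k1 k2. goodX a b (insert m (E1 \<union> E2)) rr X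
     \<and> (\<forall>u\<in>{a<..<m}. X u = X1 u + k1) \<and> (\<forall>u\<in>{m<..<b}. X u = X2 u + k2)"
proof -
  define l1 where "l1 = Inf (X1 ` {a<..<m})"
  define l2 where "l2 = Sup (X2 ` {m<..<b})"
  define X where "X u = (if u < m then X1 u - l1 else if u = m then 0 else X2 u - l2)" for u
  have dec1: "\<And>x y. x\<in>{a<..<m} \<Longrightarrow> y\<in>{a<..<m} \<Longrightarrow> x < y \<Longrightarrow> X1 y < X1 x"
    using g1 by (auto simp: goodX_def)
  have dec2: "\<And>x y. x\<in>{m<..<b} \<Longrightarrow> y\<in>{m<..<b} \<Longrightarrow> x < y \<Longrightarrow> X2 y < X2 x"
    using g2 by (auto simp: goodX_def)
  have ne1: "X1 ` {a<..<m} \<noteq> {}" using am by auto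
  have ne2: "X2 ` {m<..<b} \<noteq> {}" using mb by auto
  have bb1: "bdd_below (X1 ` {a<..<m})" using b1 by (auto simp: bdd_below_def)
  have bb2: "bdd_above (X2 ` {m<..<b})" using b2 by (auto simp: bdd_above_def)
  have gt1: "X1 u > l1" if u: "u \<in> {a<..<m}" for u
  proof -
    have "(u + m)/2 \<in> {a<..<m}" using u by auto
    then have "l1 \<le> X1 ((u+m)/2)" unfolding l1_def using bb1 by (intro cInf_lower) auto
    also have "\<dots> < X1 u" using dec1[of u "(u+m)/2"] u by auto
    finally show ?thesis .
  qed
  have lt2: "X2 u < l2" if u: "u \<in> {m<..<b}" for u
  proof -
    have "(u + m)/2 \<in> {m<..<b}" using u by auto
    then have "X2 ((u+m)/2) \<le> l2" unfolding l2_def using bb2 by (intro cSup_upper) auto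
    moreover have "X2 u < X2 ((u+m)/2)" using dec2[of "(u+m)/2" u] u by auto
    ultimately show ?thesis by simp
  qed
  have c1: "isCont X1 x" if "x \<in> {a<..<m}" for x
    using g1 that by (auto simp: goodX_def continuous_on_eq_continuous_at)
  have c2: "isCont X2 x" if "x \<in> {m<..<b}" for x
    using g2 that by (auto simp: goodX_def continuous_on_eq_continuous_at)
  have contX: "isCont X x" if x: "x \<in> {a<..<b}" for x
  proof -
    consider "x < m" | "x = m" | "x > m" by linarith
    then show ?thesis
    proof cases
      case 1
      have "isCont (\<lambda>u. X1 u - l1) x" using c1[of x] x 1 by (auto intro!: continuous_intros)
      then have "((\<lambda>u. X1 u - l1) \<longlongrightarrow> X x) (at x)" using 1 by (simp add: isCont_def X_def)
      then have "(X \<longlongrightarrow> X x) (at x)"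
        by (rule Lim_transform_within_open[of _ _ _ _ "{a<..<m}"]) (use x 1 in \<open>auto simp: X_def\<close>)
      then show ?thesis by (simp add: isCont_def)
    next
      case 3
      have "isCont (\<lambda>u. X2 u - l2) x" using c2[of x] x 3 by (auto intro!: continuous_intros)
      then have "((\<lambda>u. X2 u - l2) \<longlongrightarrow> X x) (at x)" using 3 by (simp add: isCont_def X_def)
      then have "(X \<longlongrightarrow> X x) (at x)"
        by (rule Lim_transform_within_open[of _ _ _ _ "{m<..<b}"]) (use x 3 in \<open>auto simp: X_def\<close>)
      then show ?thesis by (simp add: isCont_def)
    next
      case 2
      show ?thesis unfolding continuous_at_eps_delta
      proof (intro allI impI)
        fix e :: real assume e: "e > 0"
        obtain u0 where u0: "u0 \<in> {a<..<m}" "X1 u0 < l1 + e"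
          using cInf_less_iff[OF ne1 bb1, of "l1 + e"] e unfolding l1_def by auto
        obtain w0 where w0: "w0 \<in> {m<..<b}" "l2 - e < X2 w0"
          using less_cSup_iff[OF ne2 bb2, of "l2 - e"] e unfolding l2_def by auto
        define d where "d = min (m - u0) (w0 - m)"
        have d: "d > 0" using u0 w0 by (auto simp: d_def)
        have "\<forall>x'. dist x' x < d \<longrightarrow> dist (X x') (X x) < e"
        proof (intro allI impI)
          fix x' assume "dist x' x < d"
          then have x': "\<bar>x' - m\<bar> < d" using 2 by (simp add: dist_real_def)
          consider "x' < m" | "x' = m" | "x' > m" by linarith
          then show "dist (X x') (X x) < e"
          proof cases
            case 1
            then have xi: "x' \<in> {a<..<m}" "u0 < x'" using x' u0 by (auto simp: d_def)
            have "X1 x' < X1 u0" using dec1[OF u0(1) xi(1) xi(2)] .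
            then show ?thesis using gt1[OF xi(1)] u0 1 2 by (simp add: X_def dist_real_def)
          next
            case 2
            then show ?thesis using e \<open>x = m\<close> by simp
          next
            case 3
            then have xi: "x' \<in> {m<..<b}" "x' < w0" using x' w0 by (auto simp: d_def)
            have "X2 w0 < X2 x'" using dec2[OF xi(1) w0(1) xi(2)] .
            then show ?thesis using lt2[OF xi(1)] w0 3 2 by (simp add: X_def dist_real_def)
          qed
        qed
        then show "\<exists>d>0. \<forall>x'. dist x' x < d \<longrightarrow> dist (X x') (X x) < e" using d by blast
      qed
    qed
  qed
  have "continuous_on {a<..<b} X"
    using contX by (simp add: continuous_on_eq_continuous_at)
  moreover have "\<forall>x\<in>{a<..<b}. \<forall>y\<in>{a<..<b}. x < y \<longrightarrow> X y < X x"
  proof (intro ballI impI)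
    fix x y assume xy: "x \<in> {a<..<b}" "y \<in> {a<..<b}" "x < y"
    consider "y < m" | "x < m" "y = m" | "x < m" "m < y" | "x = m" "m < y" | "m < x"
      using xy(3) by linarith
    then show "X y < X x"
    proof cases
      case 1 then show ?thesis using dec1[of x y] xy by (auto simp: X_def)
    next
      case 2 then show ?thesis using gt1[of x] xy by (auto simp: X_def)
    next
      case 3 then show ?thesis using gt1[of x] lt2[of y] xy by (auto simp: X_def)
    next
      case 4 then show ?thesis using lt2[of y] xy by (auto simp: X_def)
    next
      case 5 then show ?thesis using dec2[of x y] xy by (auto simp: X_def)
    qed
  qed
  moreover have "\<forall>u\<in>{a<..<b} - insert m (E1 \<union> E2). (X has_real_derivative rr u) (at u)"
  proof
    fix u assume u: "u \<in> {a<..<b} - insert m (E1 \<union> E2)"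
    show "(X has_real_derivative rr u) (at u)"
    proof (cases "u < m")
      case True
      have "(X1 has_real_derivative rr u) (at u)" using g1 u True by (auto simp: goodX_def)
      then have "((\<lambda>v. X1 v - l1) has_real_derivative rr u) (at u)"
        using DERIV_diff[OF _ DERIV_const] by fastforce
      then show ?thesis
        by (rule has_field_derivative_transform_within_open[of _ _ _ "{a<..<m}"])
          (use u True in \<open>auto simp: X_def\<close>)
    next
      case False
      then have um: "u > m" using u by auto
      have "(X2 has_real_derivative rr u) (at u)" using g2 u um by (auto simp: goodX_def)
      then have "((\<lambda>v. X2 v - l2) has_real_derivative rr u) (at u)"
        using DERIV_diff[OF _ DERIV_const] by fastforce
      then show ?thesis
        by (rule has_field_derivative_transform_within_open[of _ _ _ "{m<..<b}"])
          (use u um in \<open>auto simp: X_def\<close>)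
    qed
  qed
  moreover have "finite (insert m (E1 \<union> E2))" using g1 g2 by (auto simp: goodX_def)
  moreover have "\<forall>u\<in>{a<..<m}. X u = X1 u + (- l1)" by (auto simp: X_def)
  moreover have "\<forall>u\<in>{m<..<b}. X u = X2 u + (- l2)" by (auto simp: X_def)
  ultimately show ?thesis unfolding goodX_def by blast
qed



definition phiX :: "(real \<Rightarrow> real) \<Rightarrow> real \<Rightarrow> real" where
  "phiX X \<xi> = Sup (insert 0 {u\<in>{0<..<1}. \<xi> < X u})"

context
  fixes X :: "real \<Rightarrow> real" and E rr
  assumes gX: "goodX 0 1 E rr X"
begin

lemma decX: "x\<in>{0<..<1} \<Longrightarrow> y\<in>{0<..<1} \<Longrightarrow> x < y \<Longrightarrow> X y < X x"
  using gX by (auto simp: goodX_def)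

lemma decX_iff: "x\<in>{0<..<1} \<Longrightarrow> y\<in>{0<..<1} \<Longrightarrow> X y < X x \<longleftrightarrow> x < y"
  using decX[of x y] decX[of y x] by (cases x y rule: linorder_cases) auto

lemma contX: "x\<in>{0<..<1} \<Longrightarrow> isCont X x"
  using gX by (auto simp: goodX_def continuous_on_eq_continuous_at)

lemma phi_bdd: "bdd_above (insert 0 {u\<in>{0<..<1}. \<xi> < X u})"
  by (rule bdd_aboveI[of _ 1]) auto

lemma phi_range: "0 \<le> phiX X \<xi>" "phiX X \<xi> \<le> 1"
proof -
  show "0 \<le> phiX X \<xi>" unfolding phiX_def by (rule cSup_upper[OF _ phi_bdd]) auto
  show "phiX X \<xi> \<le> 1" unfolding phiX_def by (rule cSup_least) auto
qed

lemma phi_anti: "\<xi>1 \<le> \<xi>2 \<Longrightarrow> phiX X \<xi>2 \<le> phiX X \<xi>1"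
  unfolding phiX_def by (rule cSup_subset_mono[OF _ phi_bdd]) auto

lemma phi_X: assumes u: "u \<in> {0<..<1}" shows "phiX X (X u) = u"
proof -
  have "insert 0 {v\<in>{0<..<1}. X u < X v} = {0..<u}"
    using u decX_iff[of v u for v] by (auto simp: decX_iff)
  then show ?thesis using u by (simp add: phiX_def)
qed

lemma phi_inv: assumes p: "0 < phiX X \<xi>" "phiX X \<xi> < 1" shows "X (phiX X \<xi>) = \<xi>"
proof -
  define u where "u = phiX X \<xi>"
  have u: "u \<in> {0<..<1}" using p by (auto simp: u_def)
  have cu: "isCont X u" using contX[OF u] .
  consider "\<xi> < X u" | "\<xi> > X u" | "\<xi> = X u" by linarith
  then show ?thesis
  proof cases
    case 1
    obtain d where d: "d > 0" "\<And>v. dist v u < d \<Longrightarrow> dist (X v) (X u) < X u - \<xi>"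
      using cu[unfolded continuous_at_eps_delta] 1 by (meson diff_gt_0_iff_gt)
    define v where "v = min (u + d/2) ((u+1)/2)"
    have v: "v \<in> {0<..<1}" "u < v" "dist v u < d" using u d by (auto simp: v_def dist_real_def min_def)
    have "\<xi> < X v" using d(2)[OF v(3)] by (simp add: dist_real_def)
    then have "v \<le> u" unfolding u_def phiX_def using v by (intro cSup_upper[OF _ phi_bdd]) auto
    then show ?thesis using v by simp
  next
    case 2
    obtain d where d: "d > 0" "\<And>v. dist v u < d \<Longrightarrow> dist (X v) (X u) < \<xi> - X u"
      using cu[unfolded continuous_at_eps_delta] 2 by (meson diff_gt_0_iff_gt)
    have "Sup (insert 0 {u\<in>{0<..<1}. \<xi> < X u}) \<le> max 0 (u - d)"
    proof (rule cSup_least)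
      fix w assume w: "w \<in> insert 0 {u\<in>{0<..<1}. \<xi> < X u}"
      show "w \<le> max 0 (u - d)"
      proof (cases "w = 0")
        case False
        then have w': "w \<in> {0<..<1}" "\<xi> < X w" using w by auto
        have "\<not> (w > u - d)"
        proof
          assume wd: "w > u - d"
          show False
          proof (cases "w < u")
            case True
            then have "dist w u < d" using wd by (simp add: dist_real_def)
            then have "X w < \<xi>" using d(2) by (simp add: dist_real_def abs_less_iff)
            then show False using w' by simp
          next
            case False
            then have "X w \<le> X u" using decX[of u w] u w' by (cases "w = u") auto
            then show False using w' 2 by simp
          qed
        qed
        then show ?thesis by simp
      qed simp
    qed simp
    then have "u \<le> max 0 (u - d)" by (simp add: u_def phiX_def)
    then show ?thesis using u d by auto
  qed (simp add: u_def)
qed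

lemma phi_lim1: "(phiX X \<longlongrightarrow> 1) at_bot"
proof (rule tendstoI)
  fix e :: real assume e: "e > 0"
  define u where "u = max (1/2) (1 - e/2)"
  have u: "u \<in> {0<..<1}" using e by (auto simp: u_def)
  have "\<forall>\<xi>\<le>X u. dist (phiX X \<xi>) 1 < e"
  proof (intro allI impI)
    fix \<xi> assume "\<xi> \<le> X u"
    then have "u \<le> phiX X \<xi>" using phi_anti[of \<xi> "X u"] phi_X[OF u] by simp
    then show "dist (phiX X \<xi>) 1 < e" using phi_range[of \<xi>] e
      by (auto simp: dist_real_def u_def)
  qed
  then show "eventually (\<lambda>\<xi>. dist (phiX X \<xi>) 1 < e) at_bot"
    unfolding eventually_at_bot_linorder by blast
qed

lemma phi_lim0: "(phiX X \<longlongrightarrow> 0) at_top"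
proof (rule tendstoI)
  fix e :: real assume e: "e > 0"
  define u where "u = min (1/2) (e/2)"
  have u: "u \<in> {0<..<1}" using e by (auto simp: u_def)
  have "\<forall>\<xi>\<ge>X u. dist (phiX X \<xi>) 0 < e"
  proof (intro allI impI)
    fix \<xi> assume "\<xi> \<ge> X u"
    then have "phiX X \<xi> \<le> u" using phi_anti[of "X u" \<xi>] phi_X[OF u] by simp
    then show "dist (phiX X \<xi>) 0 < e" using phi_range[of \<xi>] e
      by (auto simp: dist_real_def u_def)
  qed
  then show "eventually (\<lambda>\<xi>. dist (phiX X \<xi>) 0 < e) at_top"
    unfolding eventually_at_top_linorder by blast
qed

lemma phi_cont: "isCont (phiX X) \<xi>"
  unfolding continuous_at_eps_delta
proof (intro allI impI)
  fix e :: real assume e: "e > 0"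
  define u0 where "u0 = phiX X \<xi>"
  have r0: "0 \<le> u0" "u0 \<le> 1" using phi_range by (auto simp: u0_def)
  obtain \<xi>1 where x1: "\<xi>1 < \<xi>" "\<And>y. \<xi>1 < y \<Longrightarrow> phiX X y < u0 + e"
  proof (cases "u0 + e/2 < 1")
    case True
    define v where "v = u0 + e/2"
    have v: "v \<in> {0<..<1}" using True r0 e by (auto simp: v_def)
    have pv: "phiX X (X v) = v" using phi_X[OF v] .
    have "X v < \<xi>"
    proof (rule ccontr)
      assume "\<not> X v < \<xi>"
      then have "phiX X (X v) \<le> u0" using phi_anti[of \<xi> "X v"] by (simp add: u0_def)
      then show False using pv e by (simp add: v_def)
    qed
    moreover have "phiX X y < u0 + e" if "X v < y" for y
      using phi_anti[of "X v" y] that pv e by (simp add: v_def)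
    ultimately show ?thesis using that by blast
  next
    case False
    have "phiX X y < u0 + e" for y using phi_range[of y] False e by simp
    then show ?thesis using that[of "\<xi> - 1"] by simp
  qed
  obtain \<xi>2 where x2: "\<xi> < \<xi>2" "\<And>y. y < \<xi>2 \<Longrightarrow> phiX X y > u0 - e"
  proof (cases "u0 - e/2 > 0")
    case True
    define v where "v = u0 - e/2"
    have v: "v \<in> {0<..<1}" using True r0 e by (auto simp: v_def)
    have pv: "phiX X (X v) = v" using phi_X[OF v] .
    have "\<xi> < X v"
    proof (rule ccontr)
      assume "\<not> \<xi> < X v"
      then have "u0 \<le> phiX X (X v)" using phi_anti[of "X v" \<xi>] by (simp add: u0_def)
      then show False using pv e by (simp add: v_def)
    qed
    moreover have "phiX X y > u0 - e" if "y < X v" for y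
      using phi_anti[of y "X v"] that pv e by (simp add: v_def)
    ultimately show ?thesis using that by blast
  next
    case False
    have "phiX X y > u0 - e" for y using phi_range[of y] False e by simp
    then show ?thesis using that[of "\<xi> + 1"] by simp
  qed
  define d where "d = min (\<xi> - \<xi>1) (\<xi>2 - \<xi>)"
  have "d > 0" using x1 x2 by (simp add: d_def)
  moreover have "dist (phiX X y) (phiX X \<xi>) < e" if "dist y \<xi> < d" for y
  proof -
    have "\<xi>1 < y" "y < \<xi>2" using that by (auto simp: d_def dist_real_def)
    then show ?thesis using x1(2)[of y] x2(2)[of y] by (simp add: dist_real_def u0_def abs_less_iff)
  qed
  ultimately show "\<exists>d>0. \<forall>y. dist y \<xi> < d \<longrightarrow> dist (phiX X y) (phiX X \<xi>) < e" by blast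
qed

lemma phi_deriv:
  assumes p: "phiX X \<xi> \<in> {0<..<1} - E" and nz: "rr (phiX X \<xi>) \<noteq> 0"
  shows "(phiX X has_real_derivative inverse (rr (phiX X \<xi>))) (at \<xi>)"
proof -
  define u where "u = phiX X \<xi>"
  have u: "0 < u" "u < 1" using p by (auto simp: u_def)
  obtain d where d: "d > 0" "\<And>y. dist y \<xi> < d \<Longrightarrow> dist (phiX X y) u < min u (1 - u)"
    using phi_cont[of \<xi>, unfolded continuous_at_eps_delta] u unfolding u_def
    by (metis diff_gt_0_iff_gt min_less_iff_conj)
  show ?thesis
  proof (rule DERIV_inverse_function[where f = X and a = "\<xi> - d" and b = "\<xi> + d"])
    show "(X has_real_derivative rr (phiX X \<xi>)) (at (phiX X \<xi>))"
      using gX p by (auto simp: goodX_def)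
    show "rr (phiX X \<xi>) \<noteq> 0" by (rule nz)
    show "\<xi> - d < \<xi>" "\<xi> < \<xi> + d" using d by auto
    show "isCont (phiX X) \<xi>" by (rule phi_cont)
    fix y assume y: "\<xi> - d < y" "y < \<xi> + d"
    then have "dist (phiX X y) u < min u (1 - u)" using d(2)[of y] by (simp add: dist_real_def)
    then have "0 < phiX X y" "phiX X y < 1" by (auto simp: dist_real_def)
    then show "X (phiX X y) = y" by (rule phi_inv)
  qed
qed

lemma subsingleton_finite: "(\<And>x y. x \<in> S \<Longrightarrow> y \<in> S \<Longrightarrow> x = y) \<Longrightarrow> finite S"
  by (metis finite.simps insertI1 subsetI finite_subset)

definition "N0 = {\<xi>. phiX X \<xi> = 0 \<and> \<not> (\<exists>\<xi>'<\<xi>. phiX X \<xi>' = 0)}"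
definition "N1 = {\<xi>. phiX X \<xi> = 1 \<and> \<not> (\<exists>\<xi>'>\<xi>. phiX X \<xi>' = 1)}"

lemma finite_N0: "finite N0"
  by (rule subsingleton_finite) (auto simp: N0_def, metis linorder_neqE_linordered_idom)

lemma finite_N1: "finite N1"
  by (rule subsingleton_finite) (auto simp: N1_def, metis linorder_neqE_linordered_idom)

lemma phi_const0:
  assumes "phiX X \<xi> = 0" "\<xi> \<notin> N0"
  shows "\<exists>S. open S \<and> \<xi> \<in> S \<and> (\<forall>y\<in>S. phiX X y = 0)"
proof -
  obtain \<xi>' where x: "\<xi>' < \<xi>" "phiX X \<xi>' = 0" using assms by (auto simp: N0_def)
  have "\<forall>y\<in>{\<xi>'<..}. phiX X y = 0"
    using phi_anti[of \<xi>' y for y] phi_range x by (auto intro: order.antisym)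
  then show ?thesis using x by (intro exI[of _ "{\<xi>'<..}"]) auto
qed

lemma phi_const1:
  assumes "phiX X \<xi> = 1" "\<xi> \<notin> N1"
  shows "\<exists>S. open S \<and> \<xi> \<in> S \<and> (\<forall>y\<in>S. phiX X y = 1)"
proof -
  obtain \<xi>' where x: "\<xi>' > \<xi>" "phiX X \<xi>' = 1" using assms by (auto simp: N1_def)
  have "\<forall>y\<in>{..<\<xi>'}. phiX X y = 1"
    using phi_anti[of y \<xi>' for y] phi_range x by (auto intro: order.antisym)
  then show ?thesis using x by (intro exI[of _ "{..<\<xi>'}"]) auto
qed

end



lemma sing_null: "{x::real} \<in> null_sets lebesgue"
  using insert_null_sets_iff[of x "{}"] by simp

lemma wavefront_intro:
  fixes \<phi> \<phi>d Z f D g :: "real \<Rightarrow> real" and c :: real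
  assumes c\<phi>: "\<And>\<xi>. isCont \<phi> \<xi>" and rng: "\<And>\<xi>. 0 \<le> \<phi> \<xi> \<and> \<phi> \<xi> \<le> 1"
    and anti: "\<And>x y. x \<le> y \<Longrightarrow> \<phi> y \<le> \<phi> x"
    and lim1: "(\<phi> \<longlongrightarrow> 1) at_bot" and lim0: "(\<phi> \<longlongrightarrow> 0) at_top"
    and fin: "finite N"
    and dphi: "\<And>\<xi>. \<xi> \<notin> N \<Longrightarrow> (\<phi> has_real_derivative \<phi>d \<xi>) (at \<xi>)"
    and flux: "\<And>\<xi>. \<xi> \<notin> N \<Longrightarrow> D (\<phi> \<xi>) * \<phi>d \<xi> = Z (\<phi> \<xi>)"
    and dW: "\<And>\<xi>. \<xi> \<notin> N \<Longrightarrow> ((\<lambda>\<xi>. Z (\<phi> \<xi>) - f (\<phi> \<xi>) + c * \<phi> \<xi>) has_real_derivative - g (\<phi> \<xi>)) (at \<xi>)"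
    and cZ: "continuous_on {0..1} Z" and cf: "continuous_on {0..1} f" and cg: "continuous_on {0..1} g"
  shows "wavefront f D g c \<phi>"
proof -
  have cN: "countable N" using fin by (rule countable_finite)
  have nullN: "\<And>x. x \<in> N \<Longrightarrow> emeasure lebesgue {x} = 0" using sing_null by (auto simp: null_sets_def)
  have setsN: "\<And>x. x \<in> N \<Longrightarrow> {x} \<in> sets lebesgue" using sing_null by (auto simp: null_sets_def)
  have cont: "continuous_on UNIV \<phi>" using c\<phi> by (simp add: continuous_at_imp_continuous_on)
  have comp: "continuous_on UNIV (\<lambda>\<xi>. F (\<phi> \<xi>))" if "continuous_on {0..1} F" for F :: "real \<Rightarrow> real"
    by (rule continuous_on_compose2[OF that cont]) (use rng in auto)
  have der_eq: "deriv \<phi> \<xi> = \<phi>d \<xi>" if "\<xi> \<notin> N" for \<xi> using DERIV_imp_deriv[OF dphi[OF that]] .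
  have AEd: "AE \<xi> in lebesgue. \<phi> differentiable (at \<xi>)"
  proof -
    have "AE \<xi> in lebesgue. \<xi> \<notin> N" by (rule AE_discrete_difference[OF cN nullN setsN])
    then show ?thesis
      by eventually_elim (use dphi in \<open>auto simp: real_differentiable_def\<close>)
  qed
  have sint: "set_integrable lebesgue {a..b} (\<lambda>\<xi>. D (\<phi> \<xi>) * deriv \<phi> \<xi>)" for a b
  proof -
    have "(\<lambda>\<xi>. Z (\<phi> \<xi>)) absolutely_integrable_on {a..b}"
      by (rule absolutely_integrable_continuous_real, rule continuous_on_subset[OF comp[OF cZ]]) auto
    then have "integrable lebesgue (\<lambda>x. indicator {a..b} x *\<^sub>R Z (\<phi> x))"
      by (simp add: set_integrable_def)
    moreover have "integrable lebesgue (\<lambda>x. indicator {a..b} x *\<^sub>R (D (\<phi> x) * deriv \<phi> x))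
        \<longleftrightarrow> integrable lebesgue (\<lambda>x. indicator {a..b} x *\<^sub>R Z (\<phi> x))"
      by (rule integrable_discrete_difference[OF cN nullN setsN]) (use flux der_eq in auto)
    ultimately show ?thesis by (simp add: set_integrable_def)
  qed
  have am: "antimono \<phi>" using anti by (auto intro: antimonoI)
  have nc: "\<not> (\<exists>k. \<forall>\<xi>. \<phi> \<xi> = k)"
  proof
    assume "\<exists>k. \<forall>\<xi>. \<phi> \<xi> = k"
    then obtain k where k: "\<phi> = (\<lambda>_. k)" by auto
    have "k = 1" using lim1 k tendsto_unique[OF trivial_limit_at_bot_linorder tendsto_const] by auto
    moreover have "k = 0" using lim0 k tendsto_unique[OF trivial_limit_at_top_linorder tendsto_const] by auto
    ultimately show False by simp
  qed
  have weak: "integrable lebesgue F \<and> (\<integral>\<xi>. F \<xi> \<partial>lebesgue) = 0"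
    if F: "F = (\<lambda>\<xi>. (D (\<phi> \<xi>) * deriv \<phi> \<xi> - f (\<phi> \<xi>) + c * \<phi> \<xi>) * deriv \<psi> \<xi> - g (\<phi> \<xi>) * \<psi> \<xi>)"
      and tf: "test_fun \<psi>" for \<psi> F
  proof -
    have d0: "\<psi> differentiable (at x)" for x
      using tf[unfolded test_fun_def] by (metis funpow_0)
    have d1: "deriv \<psi> differentiable (at x)" for x
      using tf[unfolded test_fun_def] by (metis One_nat_def funpow.simps(2) funpow_0 comp_apply)
    have dpsi: "(\<psi> has_real_derivative deriv \<psi> x) (at x)" for x
      using d0 by (simp add: DERIV_deriv_iff_real_differentiable)
    have cdpsi: "isCont (deriv \<psi>) x" for x using d1 differentiable_imp_continuous_within by blast
    have cpsi: "isCont \<psi> x" for x using d0 differentiable_imp_continuous_within by blast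
    obtain R0 where R0: "\<And>x. R0 < \<bar>x\<bar> \<Longrightarrow> \<psi> x = 0" using tf unfolding test_fun_def by blast
    define R where "R = \<bar>R0\<bar> + 1"
    have R: "R > 0" "\<And>x. R \<le> \<bar>x\<bar> \<Longrightarrow> \<psi> x = 0" using R0 by (auto simp: R_def)
    have dpsi0: "deriv \<psi> x = 0" if x: "R0 < \<bar>x\<bar>" for x
    proof -
      have "((\<lambda>_. 0::real) has_real_derivative 0) (at x)" by simp
      then have "(\<psi> has_real_derivative 0) (at x)"
        by (rule has_field_derivative_transform_within_open[of _ _ _ "{x. R0 < \<bar>x\<bar>}"])
          (use x R0 in \<open>auto intro!: open_Collect_less continuous_intros\<close>)
      then show ?thesis by (rule DERIV_imp_deriv)
    qed
    define w where "w \<xi> = Z (\<phi> \<xi>) - f (\<phi> \<xi>) + c * \<phi> \<xi>" for \<xi>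
    define G where "G \<xi> = w \<xi> * deriv \<psi> \<xi> - g (\<phi> \<xi>) * \<psi> \<xi>" for \<xi>
    have cw: "continuous_on UNIV w" unfolding w_def
      by (intro continuous_intros comp cZ cf cont)
    have cG: "continuous_on UNIV G" unfolding G_def
      by (intro continuous_intros cw comp cg) (auto simp: continuous_on_eq_continuous_at cdpsi cpsi)
    have G0: "G x = 0" if "x \<notin> {-R..R}" for x
    proof -
      have "R0 < \<bar>x\<bar>" "R \<le> \<bar>x\<bar>" using that by (auto simp: R_def)
      then show ?thesis using R dpsi0 by (simp add: G_def)
    qed
    have FG: "F x = G x" if "x \<notin> N" for x
      using flux[OF that] der_eq[OF that] by (simp add: F G_def w_def)
    have hasI: "(G has_integral (w R * \<psi> R - w (-R) * \<psi> (-R))) {-R..R}"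
    proof (rule fundamental_theorem_of_calculus_interior_strong[OF fin])
      show "-R \<le> R" using R by simp
      show "continuous_on {-R..R} (\<lambda>x. w x * \<psi> x)"
        by (intro continuous_intros continuous_on_subset[OF cw] continuous_at_imp_continuous_on)
          (auto simp: cpsi)
      fix x assume x: "x \<in> {-R<..<R} - N"
      have "((\<lambda>x. w x * \<psi> x) has_real_derivative (- g (\<phi> x)) * \<psi> x + w x * deriv \<psi> x) (at x)"
        using DERIV_mult'[OF dW[of x, folded w_def] dpsi[of x]] x by (simp add: w_def[abs_def])
      then show "((\<lambda>x. w x * \<psi> x) has_vector_derivative G x) (at x)"
        by (simp add: has_real_derivative_iff_has_vector_derivative[symmetric] G_def algebra_simps)
    qed
    then have hasI0: "(G has_integral 0) {-R..R}" using R by simp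
    have Gabs: "G absolutely_integrable_on {-R..R}"
      by (rule absolutely_integrable_continuous_real, rule continuous_on_subset[OF cG]) auto
    have Geq: "(\<lambda>x. indicator {-R..R} x *\<^sub>R G x) = G"
    proof
      fix x show "indicator {-R..R} x *\<^sub>R G x = G x"
        using G0[of x] by (cases "x \<in> {-R..R}") auto
    qed
    have intG: "integrable lebesgue G" using Gabs unfolding set_integrable_def Geq .
    have "(\<integral>x. G x \<partial>lebesgue) = integral {-R..R} G"
      using set_lebesgue_integral_eq_integral(2)[OF Gabs] unfolding set_lebesgue_integral_def Geq .
    also have "\<dots> = 0" using hasI0 by (rule integral_unique)
    finally have intG0: "(\<integral>x. G x \<partial>lebesgue) = 0" .
    have "integrable lebesgue F \<longleftrightarrow> integrable lebesgue G"
      by (rule integrable_discrete_difference[OF cN nullN setsN]) (use FG in auto)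
    moreover have "(\<integral>x. F x \<partial>lebesgue) = (\<integral>x. G x \<partial>lebesgue)"
      by (rule integral_discrete_difference[OF cN nullN setsN]) (use FG in auto)
    ultimately show ?thesis using intG intG0 by simp
  qed
  show ?thesis unfolding wavefront_def Let_def
    using cont rng AEd sint am nc weak by auto
qed



lemma build_phi:
  fixes X z f h D g :: "real \<Rightarrow> real" and c :: real
  assumes gX: "goodX 0 1 E (\<lambda>u. D u / z u) X"
    and ode: "\<And>u. u \<in> {0<..<1} - E \<Longrightarrow> (z has_real_derivative (h u - c - D u * g u / z u)) (at u)
       \<and> (f has_real_derivative h u) (at u) \<and> D u \<noteq> 0 \<and> z u \<noteq> 0"
    and z01: "z 0 = 0" "z 1 = 0" and g01: "g 0 = 0" "g 1 = 0"
    and cz: "continuous_on {0..1} z" and cf: "continuous_on {0..1} f" and cg: "continuous_on {0..1} g"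
  shows "\<exists>\<phi>. wavefront f D g c \<phi> \<and> (\<phi> \<longlongrightarrow> 1) at_bot \<and> (\<phi> \<longlongrightarrow> 0) at_top"
proof -
  define rr where "rr u = D u / z u" for u
  have gX': "goodX 0 1 E rr X" using gX by (simp add: rr_def[abs_def])
  define \<phi> where "\<phi> = phiX X"
  define N where "N = X ` E \<union> N0 X \<union> N1 X"
  have finE: "finite E" using gX by (simp add: goodX_def)
  have finN: "finite N" unfolding N_def using finE finite_N0[OF gX'] finite_N1[OF gX'] by simp
  define \<phi>d where "\<phi>d \<xi> = (if 0 < \<phi> \<xi> \<and> \<phi> \<xi> < 1 then z (\<phi> \<xi>) / D (\<phi> \<xi>) else 0)" for \<xi>
  define W where "W u = z u - f u + c * u" for u
  have rng: "0 \<le> \<phi> \<xi> \<and> \<phi> \<xi> \<le> 1" for \<xi> using phi_range[OF gX'] by (simp add: \<phi>_def)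
  have key: "(\<phi> has_real_derivative \<phi>d \<xi>) (at \<xi>) \<and> D (\<phi> \<xi>) * \<phi>d \<xi> = z (\<phi> \<xi>)
      \<and> ((\<lambda>\<xi>. W (\<phi> \<xi>)) has_real_derivative - g (\<phi> \<xi>)) (at \<xi>)" if xN: "\<xi> \<notin> N" for \<xi>
  proof -
    consider "0 < \<phi> \<xi> \<and> \<phi> \<xi> < 1" | "\<phi> \<xi> = 0" | "\<phi> \<xi> = 1" using rng[of \<xi>] by linarith
    then show ?thesis
    proof cases
      case 1
      define u where "u = \<phi> \<xi>"
      have uE: "u \<notin> E"
      proof
        assume "u \<in> E"
        moreover have "X u = \<xi>" using phi_inv[OF gX'] 1 by (simp add: u_def \<phi>_def)
        ultimately show False using xN by (auto simp: N_def)
      qed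
      have u: "u \<in> {0<..<1} - E" using 1 uE by (simp add: u_def)
      note o = ode[OF u]
      have rrnz: "rr u \<noteq> 0" using o by (simp add: rr_def)
      have dphi: "(\<phi> has_real_derivative inverse (rr u)) (at \<xi>)"
        using phi_deriv[OF gX', of \<xi>] u rrnz by (simp add: u_def \<phi>_def)
      have inv: "inverse (rr u) = z u / D u" by (simp add: rr_def)
      have pd: "\<phi>d \<xi> = z u / D u" using 1 by (simp add: \<phi>d_def u_def)
      have dW: "(W has_real_derivative (h u - c - D u * g u / z u) - h u + c) (at u)"
        unfolding W_def[abs_def] using o by (auto intro!: derivative_eq_intros)
      have "((\<lambda>\<xi>. W (\<phi> \<xi>)) has_real_derivative ((h u - c - D u * g u / z u) - h u + c) * (z u / D u)) (at \<xi>)"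
        using DERIV_chain2[OF dW[unfolded u_def] dphi[unfolded inv]] by (simp add: u_def)
      moreover have "((h u - c - D u * g u / z u) - h u + c) * (z u / D u) = - g u" using o by (simp add: field_simps)
      ultimately show ?thesis using dphi inv pd o by (simp add: u_def)
    next
      case 2
      have "\<xi> \<notin> N0 X" using xN by (simp add: N_def)
      then obtain S where S: "open S" "\<xi> \<in> S" "\<forall>y\<in>S. \<phi> y = 0"
        using phi_const0[OF gX'] 2 by (auto simp: \<phi>_def)
      have "((\<lambda>_. 0) has_real_derivative 0) (at \<xi>)" by simp
      then have d1: "(\<phi> has_real_derivative 0) (at \<xi>)"
        by (rule has_field_derivative_transform_within_open[OF _ S(1,2)]) (use S in auto)
      have "((\<lambda>_. W 0) has_real_derivative 0) (at \<xi>)" by simp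
      then have d2: "((\<lambda>\<xi>. W (\<phi> \<xi>)) has_real_derivative 0) (at \<xi>)"
        by (rule has_field_derivative_transform_within_open[OF _ S(1,2)]) (use S in auto)
      show ?thesis using d1 d2 2 z01 g01 by (simp add: \<phi>d_def)
    next
      case 3
      have "\<xi> \<notin> N1 X" using xN by (simp add: N_def)
      then obtain S where S: "open S" "\<xi> \<in> S" "\<forall>y\<in>S. \<phi> y = 1"
        using phi_const1[OF gX'] 3 by (auto simp: \<phi>_def)
      have "((\<lambda>_. 1) has_real_derivative 0) (at \<xi>)" by simp
      then have d1: "(\<phi> has_real_derivative 0) (at \<xi>)"
        by (rule has_field_derivative_transform_within_open[OF _ S(1,2)]) (use S in auto)
      have "((\<lambda>_. W 1) has_real_derivative 0) (at \<xi>)" by simp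
      then have d2: "((\<lambda>\<xi>. W (\<phi> \<xi>)) has_real_derivative 0) (at \<xi>)"
        by (rule has_field_derivative_transform_within_open[OF _ S(1,2)]) (use S in auto)
      show ?thesis using d1 d2 3 z01 g01 by (simp add: \<phi>d_def)
    qed
  qed
  have wf: "wavefront f D g c \<phi>"
  proof (rule wavefront_intro[OF _ _ _ _ _ finN, of \<phi> \<phi>d D z f c g])
    show "isCont \<phi> \<xi>" for \<xi> using phi_cont[OF gX'] by (simp add: \<phi>_def)
    show "0 \<le> \<phi> \<xi> \<and> \<phi> \<xi> \<le> 1" for \<xi> by (rule rng)
    show "x \<le> y \<Longrightarrow> \<phi> y \<le> \<phi> x" for x y using phi_anti[OF gX'] by (simp add: \<phi>_def)
    show "(\<phi> \<longlongrightarrow> 1) at_bot" using phi_lim1[OF gX'] by (simp add: \<phi>_def)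
    show "(\<phi> \<longlongrightarrow> 0) at_top" using phi_lim0[OF gX'] by (simp add: \<phi>_def)
    show "\<xi> \<notin> N \<Longrightarrow> (\<phi> has_real_derivative \<phi>d \<xi>) (at \<xi>)" for \<xi> using key by blast
    show "\<xi> \<notin> N \<Longrightarrow> D (\<phi> \<xi>) * \<phi>d \<xi> = z (\<phi> \<xi>)" for \<xi> using key by blast
    show "\<xi> \<notin> N \<Longrightarrow> ((\<lambda>\<xi>. z (\<phi> \<xi>) - f (\<phi> \<xi>) + c * \<phi> \<xi>) has_real_derivative - g (\<phi> \<xi>)) (at \<xi>)" for \<xi>
      using key[of \<xi>] by (simp add: W_def)
  qed (use cz cf cg in auto)
  show ?thesis using wf phi_lim1[OF gX'] phi_lim0[OF gX'] by (auto simp: \<phi>_def)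
qed



lemma shift_deriv: fixes F :: "real \<Rightarrow> real" shows "(F has_real_derivative F') (at (m + t)) \<Longrightarrow> ((\<lambda>t. F (m + t)) has_real_derivative F') (at t)"
proof -
  assume a: "(F has_real_derivative F') (at (m + t))"
  have "((\<lambda>t. m + t) has_real_derivative 1) (at t)" by (auto intro!: derivative_eq_intros)
  from DERIV_chain2[OF a this] show ?thesis by simp
qed

lemma refl_deriv: fixes F :: "real \<Rightarrow> real" shows "(F has_real_derivative F') (at (m - t)) \<Longrightarrow> ((\<lambda>t. F (m - t)) has_real_derivative - F') (at t)"
proof -
  assume a: "(F has_real_derivative F') (at (m - t))"
  have "((\<lambda>t. m - t) has_real_derivative -1) (at t)" by (auto intro!: derivative_eq_intros)
  from DERIV_chain2[OF a this] show ?thesis by simp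
qed

lemma cont_shift: fixes F :: "real \<Rightarrow> real" shows "continuous_on {m..m+\<delta>} F \<Longrightarrow> continuous_on {0..\<delta>} (\<lambda>t. F (m + t))"
proof -
  assume a: "continuous_on {m..m+\<delta>} F"
  have c: "continuous_on {0..\<delta>} (\<lambda>t. m + t)" by (intro continuous_intros)
  show ?thesis by (rule continuous_on_compose2[OF a c]) auto
qed

lemma cont_refl: fixes F :: "real \<Rightarrow> real" shows "continuous_on {m-\<delta>..m} F \<Longrightarrow> continuous_on {0..\<delta>} (\<lambda>t. F (m - t))"
proof -
  assume a: "continuous_on {m-\<delta>..m} F"
  have c: "continuous_on {0..\<delta>} (\<lambda>t. m - t)" by (intro continuous_intros)
  show ?thesis by (rule continuous_on_compose2[OF a c]) auto
qed

lemma alpha_right: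
  fixes z f h D g X :: "real \<Rightarrow> real"
  assumes d: "0 < \<delta>" "\<delta> \<le> 1" and tau: "0 < \<tau>" "\<tau> < 1" and L: "L > 0" and e: "e = 1 \<or> e = -1"
    and K: "K \<ge> 0" and M: "M \<ge> 0" and G: "G \<ge> 0"
    and cz: "continuous_on {m..m+\<delta>} z" and z0: "z m = 0"
    and zpos: "\<And>s. m < s \<Longrightarrow> s < m + \<delta> \<Longrightarrow> z s > 0"
    and cf: "continuous_on {m..m+\<delta>} f"
    and dz: "\<And>s. m < s \<Longrightarrow> s < m + \<delta> \<Longrightarrow> (z has_real_derivative (h s - c - D s * g s / z s)) (at s)"
    and df: "\<And>s. m < s \<Longrightarrow> s < m + \<delta> \<Longrightarrow> (f has_real_derivative h s) (at s)"
    and hb: "\<And>s. m < s \<Longrightarrow> s < m + \<delta> \<Longrightarrow> \<bar>h s - c\<bar> \<le> K"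
    and Dsg: "\<And>s. m < s \<Longrightarrow> s < m + \<delta> \<Longrightarrow> D s \<le> 0"
    and Db: "\<And>s. m < s \<Longrightarrow> s < m + \<delta> \<Longrightarrow> \<bar>D s\<bar> \<le> M * (s - m)"
    and gb: "\<And>s. m < s \<Longrightarrow> s < m + \<delta> \<Longrightarrow> \<bar>g s\<bar> \<le> G"
    and glow: "\<And>s. m < s \<Longrightarrow> s < m + \<delta> \<Longrightarrow> e * g s \<ge> L * (s - m) powr \<tau>"
    and dX: "\<And>s. m < s \<Longrightarrow> s < m + \<delta> \<Longrightarrow> (X has_real_derivative D s / z s) (at s)"
  shows "\<exists>Bd. \<forall>t\<in>{0<..<\<delta>}. Bd \<le> - X (m + t)"
proof -
  have cfr: "continuous_on {0..\<delta>} (\<lambda>t. f (m + t) - c * (m + t))"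
    using cont_shift[OF cf] by (intro continuous_intros)
  show ?thesis
proof (rule local_alpha[OF d tau L e K _ cont_shift[OF cz] _ _ cfr,
      where k = "\<lambda>t. h (m + t) - c" and gt = "\<lambda>t. g (m + t)" and v = "\<lambda>t. - D (m + t) / z (m + t)"
      and B = "G * M"])
  show "0 \<le> G * M" using G M by simp
  show "z (m + 0) = 0" using z0 by simp
  fix t assume t: "0 < t" "t < \<delta>"
  have s: "m < m + t" "m + t < m + \<delta>" using t by auto
  have zp: "z (m + t) > 0" using zpos[OF s] .
  show "0 < z (m + t)" by (rule zp)
  show "((\<lambda>t. f (m + t) - c * (m + t)) has_real_derivative h (m + t) - c) (at t)"
    using shift_deriv[OF df[OF s]] by (auto intro!: derivative_eq_intros)
  show "\<bar>h (m + t) - c\<bar> \<le> K" using hb[OF s] .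
  have "h (m + t) - c - D (m + t) * g (m + t) / z (m + t) = h (m + t) - c + g (m + t) * (- D (m + t) / z (m + t))"
    by (simp add: field_simps)
  then show "((\<lambda>t. z (m + t)) has_real_derivative h (m + t) - c + g (m + t) * (- D (m + t) / z (m + t))) (at t)"
    by (rule DERIV_cong[OF shift_deriv[OF dz[OF s]]]; simp add: field_simps)
  show "0 \<le> - D (m + t) / z (m + t)" using Dsg[OF s] zp by (simp add: divide_nonpos_pos)
  have "- D (m + t) / z (m + t) \<le> M * t / z (m + t)"
    using Db[OF s] zp by (intro divide_right_mono) auto
  then have "\<bar>g (m + t)\<bar> * (- D (m + t) / z (m + t)) \<le> G * (M * t / z (m + t))"
    using gb[OF s] Dsg[OF s] zp by (intro mult_mono) (auto simp: divide_nonpos_pos)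
  then show "\<bar>g (m + t)\<bar> * (- D (m + t) / z (m + t)) \<le> G * M * t / z (m + t)" by simp
  show "L * t powr \<tau> \<le> e * g (m + t)" using glow[OF s] by simp
  show "((\<lambda>t. - X (m + t)) has_real_derivative - D (m + t) / z (m + t)) (at t)"
    using DERIV_minus[OF shift_deriv[OF dX[OF s]]] by simp
qed
qed

lemma alpha_left:
  fixes z f h D g X :: "real \<Rightarrow> real"
  assumes d: "0 < \<delta>" "\<delta> \<le> 1" and tau: "0 < \<tau>" "\<tau> < 1" and L: "L > 0" and e: "e = 1 \<or> e = -1"
    and K: "K \<ge> 0" and M: "M \<ge> 0" and G: "G \<ge> 0"
    and cz: "continuous_on {m-\<delta>..m} z" and z0: "z m = 0"
    and zneg: "\<And>s. m - \<delta> < s \<Longrightarrow> s < m \<Longrightarrow> z s < 0"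
    and cf: "continuous_on {m-\<delta>..m} f"
    and dz: "\<And>s. m - \<delta> < s \<Longrightarrow> s < m \<Longrightarrow> (z has_real_derivative (h s - c - D s * g s / z s)) (at s)"
    and df: "\<And>s. m - \<delta> < s \<Longrightarrow> s < m \<Longrightarrow> (f has_real_derivative h s) (at s)"
    and hb: "\<And>s. m - \<delta> < s \<Longrightarrow> s < m \<Longrightarrow> \<bar>h s - c\<bar> \<le> K"
    and Dsg: "\<And>s. m - \<delta> < s \<Longrightarrow> s < m \<Longrightarrow> D s \<ge> 0"
    and Db: "\<And>s. m - \<delta> < s \<Longrightarrow> s < m \<Longrightarrow> \<bar>D s\<bar> \<le> M * (m - s)"
    and gb: "\<And>s. m - \<delta> < s \<Longrightarrow> s < m \<Longrightarrow> \<bar>g s\<bar> \<le> G"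
    and glow: "\<And>s. m - \<delta> < s \<Longrightarrow> s < m \<Longrightarrow> e * g s \<ge> L * (m - s) powr \<tau>"
    and dX: "\<And>s. m - \<delta> < s \<Longrightarrow> s < m \<Longrightarrow> (X has_real_derivative D s / z s) (at s)"
  shows "\<exists>Bd. \<forall>t\<in>{0<..<\<delta>}. Bd \<le> X (m - t)"
proof -
  have czr: "continuous_on {0..\<delta>} (\<lambda>t. - z (m - t))"
    using cont_refl[OF cz] by (intro continuous_intros)
  have cfr: "continuous_on {0..\<delta>} (\<lambda>t. - (f (m - t) - c * (m - t)))"
    using cont_refl[OF cf] by (intro continuous_intros)
  show ?thesis
  proof (rule local_alpha[OF d tau L e K _ czr _ _ cfr,
      where k = "\<lambda>t. h (m - t) - c" and gt = "\<lambda>t. g (m - t)" and v = "\<lambda>t. - D (m - t) / z (m - t)"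
      and B = "G * M"])
    show "0 \<le> G * M" using G M by simp
    show "- z (m - 0) = 0" using z0 by simp
    fix t assume t: "0 < t" "t < \<delta>"
    have s: "m - \<delta> < m - t" "m - t < m" using t by auto
    have zn: "z (m - t) < 0" using zneg[OF s] .
    show "0 < - z (m - t)" using zn by simp
    show "((\<lambda>t. - (f (m - t) - c * (m - t))) has_real_derivative h (m - t) - c) (at t)"
      using refl_deriv[OF df[OF s]] by (auto intro!: derivative_eq_intros)
    show "\<bar>h (m - t) - c\<bar> \<le> K" using hb[OF s] .
    have "- (- (h (m - t) - c - D (m - t) * g (m - t) / z (m - t))) = h (m - t) - c + g (m - t) * (- D (m - t) / z (m - t))"
      by (simp add: field_simps)
    then show "((\<lambda>t. - z (m - t)) has_real_derivative h (m - t) - c + g (m - t) * (- D (m - t) / z (m - t))) (at t)"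
      by (rule DERIV_cong[OF DERIV_minus[OF refl_deriv[OF dz[OF s]]]]; simp add: field_simps)
    show "0 \<le> - D (m - t) / z (m - t)" using Dsg[OF s] zn by (simp add: divide_nonneg_neg)
    have "- D (m - t) / z (m - t) = \<bar>D (m - t)\<bar> / (- z (m - t))" using Dsg[OF s] zn by (simp add: field_simps)
    also have "\<dots> \<le> M * t / (- z (m - t))"
      using Db[OF s] zn by (intro divide_right_mono) auto
    finally have vb: "- D (m - t) / z (m - t) \<le> M * t / (- z (m - t))" .
    have "\<bar>g (m - t)\<bar> * (- D (m - t) / z (m - t)) \<le> G * (M * t / (- z (m - t)))"
      using gb[OF s] Dsg[OF s] zn vb by (intro mult_mono) (auto simp: divide_nonneg_neg)
    then show "\<bar>g (m - t)\<bar> * (- D (m - t) / z (m - t)) \<le> G * M * t / (- z (m - t))" by simp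
    show "L * t powr \<tau> \<le> e * g (m - t)" using glow[OF s] by simp
    show "((\<lambda>t. X (m - t)) has_real_derivative - D (m - t) / z (m - t)) (at t)"
      using refl_deriv[OF dX[OF s]] by simp
  qed
qed

lemma gamma_right:
  fixes z h D g X :: "real \<Rightarrow> real"
  assumes d: "0 < \<delta>" "\<delta> \<le> 1" and tau: "0 < \<tau>" "\<tau> < 1" and L: "L > 0" and d0: "d0 > 0"
    and K: "K \<ge> 0" and M: "M \<ge> 0"
    and cz: "continuous_on {m..m+\<delta>} z" and z0: "z m = 0"
    and zpos: "\<And>s. m < s \<Longrightarrow> s < m + \<delta> \<Longrightarrow> z s > 0"
    and dz: "\<And>s. m < s \<Longrightarrow> s < m + \<delta> \<Longrightarrow> (z has_real_derivative (h s - c - D s * g s / z s)) (at s)"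
    and hb: "\<And>s. m < s \<Longrightarrow> s < m + \<delta> \<Longrightarrow> \<bar>h s - c\<bar> \<le> K"
    and Dsg: "\<And>s. m < s \<Longrightarrow> s < m + \<delta> \<Longrightarrow> D s \<le> - d0"
    and Db: "\<And>s. m < s \<Longrightarrow> s < m + \<delta> \<Longrightarrow> \<bar>D s\<bar> \<le> M"
    and glow: "\<And>s. m < s \<Longrightarrow> s < m + \<delta> \<Longrightarrow> g s \<ge> L * (s - m) powr \<tau>"
    and dX: "\<And>s. m < s \<Longrightarrow> s < m + \<delta> \<Longrightarrow> (X has_real_derivative D s / z s) (at s)"
  shows "\<exists>Bd. \<forall>t\<in>{0<..<\<delta>}. Bd \<le> - X (m + t)"
proof (rule local_gamma[OF d tau _ K M cont_shift[OF cz],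
      where cL = "d0 * L" and \<zeta>d = "\<lambda>t. h (m + t) - c - D (m + t) * g (m + t) / z (m + t)"
      and v = "\<lambda>t. - D (m + t) / z (m + t)"])
  show "0 < d0 * L" using d0 L by simp
  show "z (m + 0) = 0" using z0 by simp
  fix t assume t: "0 < t" "t < \<delta>"
  have s: "m < m + t" "m + t < m + \<delta>" using t by auto
  have zp: "z (m + t) > 0" using zpos[OF s] .
  show "0 < z (m + t)" by (rule zp)
  show "((\<lambda>t. z (m + t)) has_real_derivative h (m + t) - c - D (m + t) * g (m + t) / z (m + t)) (at t)"
    using shift_deriv[OF dz[OF s]] by simp
  have P: "t powr \<tau> \<ge> 0" by simp
  have "d0 * (L * t powr \<tau>) \<le> (- D (m + t)) * g (m + t)"
    using Dsg[OF s] glow[OF s] d0 L P by (intro mult_mono) auto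
  then have "d0 * L * t powr \<tau> / z (m + t) \<le> (- D (m + t) * g (m + t)) / z (m + t)"
    using zp by (intro divide_right_mono) (auto simp: algebra_simps)
  then show "- K + d0 * L * t powr \<tau> / z (m + t) \<le> h (m + t) - c - D (m + t) * g (m + t) / z (m + t)"
    using hb[OF s] by (simp add: field_simps abs_le_iff)
  show "0 \<le> - D (m + t) / z (m + t)" using Dsg[OF s] zp d0 by (simp add: divide_nonpos_pos)
  show "- D (m + t) / z (m + t) \<le> M / z (m + t)" using Db[OF s] zp by (intro divide_right_mono) auto
  show "((\<lambda>t. - X (m + t)) has_real_derivative - D (m + t) / z (m + t)) (at t)"
    using DERIV_minus[OF shift_deriv[OF dX[OF s]]] by simp
qed

lemma gamma_left:
  fixes z h D g X :: "real \<Rightarrow> real"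
  assumes d: "0 < \<delta>" "\<delta> \<le> 1" and tau: "0 < \<tau>" "\<tau> < 1" and L: "L > 0" and d0: "d0 > 0"
    and K: "K \<ge> 0" and M: "M \<ge> 0"
    and cz: "continuous_on {m-\<delta>..m} z" and z0: "z m = 0"
    and zpos: "\<And>s. m - \<delta> < s \<Longrightarrow> s < m \<Longrightarrow> z s > 0"
    and dz: "\<And>s. m - \<delta> < s \<Longrightarrow> s < m \<Longrightarrow> (z has_real_derivative (h s - c - D s * g s / z s)) (at s)"
    and hb: "\<And>s. m - \<delta> < s \<Longrightarrow> s < m \<Longrightarrow> \<bar>h s - c\<bar> \<le> K"
    and Dsg: "\<And>s. m - \<delta> < s \<Longrightarrow> s < m \<Longrightarrow> D s \<le> - d0"
    and Db: "\<And>s. m - \<delta> < s \<Longrightarrow> s < m \<Longrightarrow> \<bar>D s\<bar> \<le> M"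
    and glow: "\<And>s. m - \<delta> < s \<Longrightarrow> s < m \<Longrightarrow> - g s \<ge> L * (m - s) powr \<tau>"
    and dX: "\<And>s. m - \<delta> < s \<Longrightarrow> s < m \<Longrightarrow> (X has_real_derivative D s / z s) (at s)"
  shows "\<exists>Bd. \<forall>t\<in>{0<..<\<delta>}. Bd \<le> X (m - t)"
proof (rule local_gamma[OF d tau _ K M cont_refl[OF cz],
      where cL = "d0 * L" and \<zeta>d = "\<lambda>t. - (h (m - t) - c - D (m - t) * g (m - t) / z (m - t))"
      and v = "\<lambda>t. - D (m - t) / z (m - t)"])
  show "0 < d0 * L" using d0 L by simp
  show "z (m - 0) = 0" using z0 by simp
  fix t assume t: "0 < t" "t < \<delta>"
  have s: "m - \<delta> < m - t" "m - t < m" using t by auto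
  have zp: "z (m - t) > 0" using zpos[OF s] .
  show "0 < z (m - t)" by (rule zp)
  show "((\<lambda>t. z (m - t)) has_real_derivative - (h (m - t) - c - D (m - t) * g (m - t) / z (m - t))) (at t)"
    using refl_deriv[OF dz[OF s]] by simp
  have P: "t powr \<tau> \<ge> 0" by simp
  have "d0 * (L * t powr \<tau>) \<le> (- D (m - t)) * (- g (m - t))"
    using Dsg[OF s] glow[OF s] d0 L P by (intro mult_mono) auto
  then have "d0 * L * t powr \<tau> / z (m - t) \<le> (D (m - t) * g (m - t)) / z (m - t)"
    using zp by (intro divide_right_mono) (auto simp: algebra_simps)
  then show "- K + d0 * L * t powr \<tau> / z (m - t) \<le> - (h (m - t) - c - D (m - t) * g (m - t) / z (m - t))"
    using hb[OF s] by (simp add: field_simps abs_le_iff)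
  show "0 \<le> - D (m - t) / z (m - t)" using Dsg[OF s] zp d0 by (simp add: divide_nonpos_pos)
  show "- D (m - t) / z (m - t) \<le> M / z (m - t)" using Db[OF s] zp by (intro divide_right_mono) auto
  show "((\<lambda>t. X (m - t)) has_real_derivative - D (m - t) / z (m - t)) (at t)"
    using refl_deriv[OF dX[OF s]] by simp
qed



lemma bound_cont:
  fixes F :: "real \<Rightarrow> real"
  assumes "continuous_on {a..b} F"
  shows "\<exists>B\<ge>0. \<forall>x\<in>{a..b}. \<bar>F x\<bar> \<le> B"
proof -
  have "bounded (F ` {a..b})"
    by (rule compact_imp_bounded[OF compact_continuous_image[OF assms compact_Icc]])
  then obtain B where "\<forall>y\<in>F ` {a..b}. norm y \<le> B" by (auto simp: bounded_iff)
  then show ?thesis by (intro exI[of _ "max B 0"]) force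
qed

lemma lip:
  fixes F F' :: "real \<Rightarrow> real"
  assumes ab: "a \<le> b" and c: "continuous_on {a..b} F"
    and d: "\<And>x. a < x \<Longrightarrow> x < b \<Longrightarrow> (F has_real_derivative F' x) (at x)"
    and bd: "\<And>x. a < x \<Longrightarrow> x < b \<Longrightarrow> \<bar>F' x\<bar> \<le> M"
  shows "\<bar>F b - F a\<bar> \<le> M * (b - a)"
proof -
  have "(\<lambda>x. F x - M * x) b \<le> (\<lambda>x. F x - M * x) a"
  proof (rule DERIV_nonpos_imp_decreasing_open[of a b "\<lambda>x. F x - M * x"])
    show "a \<le> b" by (rule ab)
    show "continuous_on {a..b} (\<lambda>x. F x - M * x)" by (intro continuous_intros c)
    fix x assume x: "a < x" "x < b"
    have "((\<lambda>x. F x - M * x) has_real_derivative F' x - M) (at x)"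
      using d[OF x] by (auto intro!: derivative_eq_intros)
    moreover have "F' x - M \<le> 0" using bd[OF x] by linarith
    ultimately show "\<exists>y. ((\<lambda>x. F x - M * x) has_real_derivative y) (at x) \<and> y \<le> 0" by blast
  qed
  moreover have "(\<lambda>x. F x + M * x) a \<le> (\<lambda>x. F x + M * x) b"
  proof (rule DERIV_nonneg_imp_increasing_open[of a b "\<lambda>x. F x + M * x"])
    show "a \<le> b" by (rule ab)
    show "continuous_on {a..b} (\<lambda>x. F x + M * x)" by (intro continuous_intros c)
    fix x assume x: "a < x" "x < b"
    have "((\<lambda>x. F x + M * x) has_real_derivative F' x + M) (at x)"
      using d[OF x] by (auto intro!: derivative_eq_intros)
    moreover have "F' x + M \<ge> 0" using bd[OF x] by linarith
    ultimately show "\<exists>y. ((\<lambda>x. F x + M * x) has_real_derivative y) (at x) \<and> y \<ge> 0" by blast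
  qed
  ultimately show ?thesis by (simp add: algebra_simps abs_le_iff)
qed

lemma glow_neq:
  fixes g :: "real \<Rightarrow> real"
  assumes c: "isCont g a" and nz: "g a \<noteq> 0"
  shows "\<exists>L d e. L > 0 \<and> d > 0 \<and> (e = 1 \<or> e = -1) \<and>
    (\<forall>s. \<bar>s - a\<bar> < d \<longrightarrow> e * g s \<ge> L * \<bar>s - a\<bar> powr (1/2))"
proof -
  obtain d0 where d0: "d0 > 0" "\<And>s. dist s a < d0 \<Longrightarrow> dist (g s) (g a) < \<bar>g a\<bar> / 2"
    using c[unfolded continuous_at_eps_delta] nz by (metis half_gt_zero zero_less_abs_iff)
  define e :: real where "e = (if g a > 0 then 1 else -1)"
  define L where "L = \<bar>g a\<bar> / 2"
  have "e * g s \<ge> L * \<bar>s - a\<bar> powr (1/2)" if s: "\<bar>s - a\<bar> < min d0 1" for s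
  proof -
    have "\<bar>g s - g a\<bar> < \<bar>g a\<bar> / 2" using d0(2)[of s] s by (simp add: dist_real_def)
    then have "e * g s \<ge> L" using nz unfolding e_def L_def
      by (cases "g a > 0") (auto simp: abs_less_iff abs_if split: if_splits)
    moreover have "\<bar>s - a\<bar> powr (1/2) \<le> 1" using powr_le1[of "\<bar>s - a\<bar>" "1/2"] s by simp
    moreover have "L \<ge> 0" by (simp add: L_def)
    ultimately show ?thesis by (metis mult_left_le order_trans)
  qed
  moreover have "L > 0" using nz by (simp add: L_def)
  moreover have "min d0 1 > 0" using d0 by simp
  moreover have "e = 1 \<or> e = -1" by (simp add: e_def)
  ultimately show ?thesis by blast
qed



theorem proposition3p3:
  fixes \<alpha> \<gamma> c :: real and f h D D' g q :: "real \<Rightarrow> real"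
  assumes "0 < \<alpha>" "\<alpha> < 1" "0 < \<gamma>" "\<gamma> < 1"
    and "C1_01 f h" and "f 0 = 0"
    and "C1_01 D D'"
    and "\<forall>u\<in>{0<..<\<alpha>}. D u > 0" and "\<forall>u\<in>{\<alpha><..<1}. D u < 0"
    and "continuous_on {0..1} g"
    and "\<forall>u\<in>{0<..<\<gamma>}. g u < 0" and "\<forall>u\<in>{\<gamma><..<1}. g u > 0"
    and "g 0 = 0" "g \<gamma> = 0" "g 1 = 0"
    and "\<forall>u. q u = D u * g u"
    and "((\<exists>z. problem_P h c q \<alpha> z) \<and> (\<alpha> \<noteq> \<gamma> \<or> (\<alpha> = \<gamma> \<and> cond_G2 g \<gamma>)))
         \<or> ((\<exists>z. problem_P' h c q \<alpha> \<gamma> z \<and> z \<gamma> = 0) \<and> \<alpha> < \<gamma> \<and> cond_G2 g \<gamma>)"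
  shows "\<exists>\<phi>. wavefront f D g c \<phi> \<and> (\<phi> \<longlongrightarrow> 1) at_bot \<and> (\<phi> \<longlongrightarrow> 0) at_top"
proof -
  note a = assms
  have al: "0 < \<alpha>" "\<alpha> < 1" and ga: "0 < \<gamma>" "\<gamma> < 1" using a by auto
  have Dpos: "\<And>u. 0 < u \<Longrightarrow> u < \<alpha> \<Longrightarrow> D u > 0" and Dneg: "\<And>u. \<alpha> < u \<Longrightarrow> u < 1 \<Longrightarrow> D u < 0"
    using a(8,9) by auto
  have gneg: "\<And>u. 0 < u \<Longrightarrow> u < \<gamma> \<Longrightarrow> g u < 0" and gpos: "\<And>u. \<gamma> < u \<Longrightarrow> u < 1 \<Longrightarrow> g u > 0"
    using a(11,12) by auto
  have g01: "g 0 = 0" "g 1 = 0" using a by auto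
  have cg: "continuous_on {0..1} g" using a by auto
  have qdef: "\<And>u. q u = D u * g u" using a by auto
  have fd: "\<And>x. x \<in> {0..1} \<Longrightarrow> (f has_real_derivative h x) (at x within {0..1})"
    and ch: "continuous_on {0..1} h" using a(5) by (auto simp: C1_01_def)
  have Dd: "\<And>x. x \<in> {0..1} \<Longrightarrow> (D has_real_derivative D' x) (at x within {0..1})"
    and cD': "continuous_on {0..1} D'" using a(7) by (auto simp: C1_01_def)
  have df: "\<And>x. 0 < x \<Longrightarrow> x < 1 \<Longrightarrow> (f has_real_derivative h x) (at x)"
    using fd by (metis atLeastAtMost_iff at_within_interior greaterThanLessThan_iff
        interior_atLeastAtMost_real less_eq_real_def)
  have dD: "\<And>x. 0 < x \<Longrightarrow> x < 1 \<Longrightarrow> (D has_real_derivative D' x) (at x)"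
    using Dd by (metis atLeastAtMost_iff at_within_interior greaterThanLessThan_iff
        interior_atLeastAtMost_real less_eq_real_def)
  have cf: "continuous_on {0..1} f" by (rule DERIV_continuous_on[OF fd])
  have cD: "continuous_on {0..1} D" by (rule DERIV_continuous_on[OF Dd])
  have cDat: "\<And>x. 0 < x \<Longrightarrow> x < 1 \<Longrightarrow> isCont D x" using dD DERIV_isCont by blast
  have cgat: "\<And>x. 0 < x \<Longrightarrow> x < 1 \<Longrightarrow> isCont g x"
    using cg continuous_on_interior[of "{0..1}" g] by (simp add: interior_atLeastAtMost_real)
  have Da: "D \<alpha> = 0"
  proof (rule ccontr)
    assume nz: "D \<alpha> \<noteq> 0"
    obtain d where d: "d > 0" "\<And>s. dist s \<alpha> < d \<Longrightarrow> dist (D s) (D \<alpha>) < \<bar>D \<alpha>\<bar>"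
      using cDat[OF al, unfolded continuous_at_eps_delta] nz by (metis zero_less_abs_iff)
    show False
    proof (cases "D \<alpha> > 0")
      case True
      obtain md where m: "md > 0" "md \<le> 1 - \<alpha>" "md \<le> d" using d al by (intro that[of "min d (1-\<alpha>)"]) auto
      define s where "s = \<alpha> + md / 2"
      have s: "\<alpha> < s" "s < 1" "dist s \<alpha> < d" using m unfolding s_def dist_real_def by auto
      have "\<bar>D s - D \<alpha>\<bar> < \<bar>D \<alpha>\<bar>" using d(2)[OF s(3)] by (simp add: dist_real_def)
      then show False using Dneg[OF s(1,2)] True by linarith
    next
      case False
      obtain md where m: "md > 0" "md \<le> \<alpha>" "md \<le> d" using d al by (intro that[of "min d \<alpha>"]) auto
      define s where "s = \<alpha> - md / 2"
      have s: "0 < s" "s < \<alpha>" "dist s \<alpha> < d" using m unfolding s_def dist_real_def by auto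
      have "\<bar>D s - D \<alpha>\<bar> < \<bar>D \<alpha>\<bar>" using d(2)[OF s(3)] by (simp add: dist_real_def)
      then show False using Dpos[OF s(1,2)] False nz by linarith
    qed
  qed
  obtain K where K: "K \<ge> 0" "\<And>x. x \<in> {0..1} \<Longrightarrow> \<bar>h x - c\<bar> \<le> K"
  proof -
    have "continuous_on {0..1} (\<lambda>x. h x - c)" by (intro continuous_intros ch)
    then show ?thesis using bound_cont[of 0 1 "\<lambda>x. h x - c"] that by auto
  qed
  obtain G where G: "G \<ge> 0" "\<And>x. x \<in> {0..1} \<Longrightarrow> \<bar>g x\<bar> \<le> G"
    using bound_cont[OF cg] by auto
  obtain M0 where M0: "M0 \<ge> 0" "\<And>x. x \<in> {0..1} \<Longrightarrow> \<bar>D x\<bar> \<le> M0"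
    using bound_cont[OF cD] by auto
  obtain M1 where M1: "M1 \<ge> 0" "\<And>x. x \<in> {0..1} \<Longrightarrow> \<bar>D' x\<bar> \<le> M1"
    using bound_cont[OF cD'] by auto
  have DlipR: "\<bar>D s\<bar> \<le> M1 * (s - \<alpha>)" if "\<alpha> \<le> s" "s \<le> 1" for s
  proof -
    have "continuous_on {\<alpha>..s} D" by (rule continuous_on_subset[OF cD]) (use that al in auto)
    then show ?thesis using lip[of \<alpha> s D D' M1] that al Da dD M1 by auto
  qed
  have DlipL: "\<bar>D s\<bar> \<le> M1 * (\<alpha> - s)" if "0 \<le> s" "s \<le> \<alpha>" for s
  proof -
    have "continuous_on {s..\<alpha>} D" by (rule continuous_on_subset[OF cD]) (use that al in auto)
    then show ?thesis using lip[of s \<alpha> D D' M1] that al Da dD M1 by auto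
  qed
  define rr where "rr z u = D u / z u" for z :: "real \<Rightarrow> real" and u
  have rr_cont: "isCont (rr z) x" if "0 < x" "x < 1" "(z has_real_derivative z') (at x)" "z x \<noteq> 0"
    for z z' x unfolding rr_def
    using that cDat[OF that(1,2)] DERIV_isCont[OF that(3)] by (intro isCont_divide) auto
    have glowA: "\<exists>L \<tau> \<delta>g e1 e2. L > 0 \<and> 0 < \<tau> \<and> \<tau> < 1 \<and> \<delta>g > 0 \<and> (e1 = 1 \<or> e1 = -1) \<and> (e2 = 1 \<or> e2 = -1)
      \<and> (\<forall>s. \<alpha> < s \<and> s < \<alpha> + \<delta>g \<longrightarrow> e2 * g s \<ge> L * (s - \<alpha>) powr \<tau>)
      \<and> (\<forall>s. \<alpha> - \<delta>g < s \<and> s < \<alpha> \<longrightarrow> e1 * g s \<ge> L * (\<alpha> - s) powr \<tau>)"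
    if cases: "\<alpha> \<noteq> \<gamma> \<or> (\<alpha> = \<gamma> \<and> cond_G2 g \<gamma>)"
  proof (cases "\<alpha> = \<gamma>")
    case False
    have "g \<alpha> \<noteq> 0" using gneg[of \<alpha>] gpos[of \<alpha>] al False by (cases "\<alpha> < \<gamma>") auto
    then obtain L d e where Lde: "L > 0" "d > 0" "e = 1 \<or> e = -1"
        "\<And>s. \<bar>s - \<alpha>\<bar> < d \<Longrightarrow> e * g s \<ge> L * \<bar>s - \<alpha>\<bar> powr (1/2)"
      using glow_neq[OF cgat[OF al]] by blast
    have "\<forall>s. \<alpha> < s \<and> s < \<alpha> + d \<longrightarrow> e * g s \<ge> L * (s - \<alpha>) powr (1/2)"
    proof (intro allI impI)
      fix s assume s: "\<alpha> < s \<and> s < \<alpha> + d"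
      then have "\<bar>s - \<alpha>\<bar> = s - \<alpha>" "\<bar>s - \<alpha>\<bar> < d" by auto
      then show "e * g s \<ge> L * (s - \<alpha>) powr (1/2)" using Lde(4)[of s] by simp
    qed
    moreover have "\<forall>s. \<alpha> - d < s \<and> s < \<alpha> \<longrightarrow> e * g s \<ge> L * (\<alpha> - s) powr (1/2)"
    proof (intro allI impI)
      fix s assume s: "\<alpha> - d < s \<and> s < \<alpha>"
      then have "\<bar>s - \<alpha>\<bar> = \<alpha> - s" "\<bar>s - \<alpha>\<bar> < d" by auto
      then show "e * g s \<ge> L * (\<alpha> - s) powr (1/2)" using Lde(4)[of s] by simp
    qed
    ultimately show ?thesis using Lde by (intro exI[of _ L] exI[of _ "1/2"] exI[of _ d] exI[of _ e]) auto
  next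
    case True
    then have "cond_G2 g \<gamma>" using cases by simp
    then obtain L \<tau> d where G2: "L > 0" "0 < \<tau>" "\<tau> < 1" "d > 0"
        "\<And>u. \<bar>u - \<gamma>\<bar> < d \<Longrightarrow> \<bar>g u\<bar> \<ge> L * \<bar>u - \<gamma>\<bar> powr \<tau>"
      unfolding cond_G2_def by blast
    define dg where "dg = min d (min \<gamma> (1 - \<gamma>))"
    have dg: "dg > 0" "dg \<le> d" "dg \<le> \<gamma>" "dg \<le> 1 - \<gamma>" using G2 ga by (auto simp: dg_def)
    have "\<forall>s. \<alpha> < s \<and> s < \<alpha> + dg \<longrightarrow> 1 * g s \<ge> L * (s - \<alpha>) powr \<tau>"
    proof (intro allI impI)
      fix s assume s: "\<alpha> < s \<and> s < \<alpha> + dg"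
      then have "\<bar>s - \<gamma>\<bar> = s - \<alpha>" "\<bar>s - \<gamma>\<bar> < d" "g s > 0" using True dg gpos[of s] by auto
      then show "1 * g s \<ge> L * (s - \<alpha>) powr \<tau>" using G2(5)[of s] by simp
    qed
    moreover have "\<forall>s. \<alpha> - dg < s \<and> s < \<alpha> \<longrightarrow> (-1) * g s \<ge> L * (\<alpha> - s) powr \<tau>"
    proof (intro allI impI)
      fix s assume s: "\<alpha> - dg < s \<and> s < \<alpha>"
      then have "\<bar>s - \<gamma>\<bar> = \<alpha> - s" "\<bar>s - \<gamma>\<bar> < d" "g s < 0" using True dg gneg[of s] by auto
      then show "(-1) * g s \<ge> L * (\<alpha> - s) powr \<tau>" using G2(5)[of s] by simp
    qed
    ultimately show ?thesis using G2 dg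
      by (intro exI[of _ L] exI[of _ \<tau>] exI[of _ dg] exI[of _ "-1"] exI[of _ 1]) auto
  qed
    have alpha_glue: "\<exists>X k. goodX 0 b {\<alpha>} (rr z) X \<and> (\<forall>u\<in>{\<alpha><..<b}. X u = X2 u + k)"
    if b: "\<alpha> < b" "b \<le> 1" and cz: "continuous_on {0..1} z" and za: "z \<alpha> = 0"
      and zneg: "\<And>s. 0 < s \<Longrightarrow> s < \<alpha> \<Longrightarrow> z s < 0"
      and zpos: "\<And>s. \<alpha> < s \<Longrightarrow> s < b \<Longrightarrow> z s > 0"
      and dz: "\<And>s. 0 < s \<Longrightarrow> s < b \<Longrightarrow> s \<noteq> \<alpha> \<Longrightarrow> (z has_real_derivative (h s - c - D s * g s / z s)) (at s)"
      and g1: "goodX 0 \<alpha> {} (rr z) X1" and g2: "goodX \<alpha> b {} (rr z) X2"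
      and cases: "\<alpha> \<noteq> \<gamma> \<or> (\<alpha> = \<gamma> \<and> cond_G2 g \<gamma>)"
    for b z X1 X2
  proof -
    obtain L \<tau> \<delta>g e1 e2 where Lt: "L > 0" "0 < \<tau>" "\<tau> < 1" "\<delta>g > 0" "e1 = 1 \<or> e1 = -1" "e2 = 1 \<or> e2 = -1"
      and gr: "\<And>s. \<alpha> < s \<Longrightarrow> s < \<alpha> + \<delta>g \<Longrightarrow> e2 * g s \<ge> L * (s - \<alpha>) powr \<tau>"
      and gl: "\<And>s. \<alpha> - \<delta>g < s \<Longrightarrow> s < \<alpha> \<Longrightarrow> e1 * g s \<ge> L * (\<alpha> - s) powr \<tau>"
      using glowA[OF cases] by blast
    define \<delta> where "\<delta> = min \<delta>g (min \<alpha> (b - \<alpha>))"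
    have d: "0 < \<delta>" "\<delta> \<le> 1" "\<delta> \<le> \<delta>g" "\<delta> \<le> \<alpha>" "\<delta> \<le> b - \<alpha>" using Lt b al by (auto simp: \<delta>_def)
    have "\<exists>Bd. \<forall>t\<in>{0<..<\<delta>}. Bd \<le> - X2 (\<alpha> + t)"
    proof (rule alpha_right[OF d(1,2) Lt(2,3) Lt(1) Lt(6) K(1) M1(1) G(1)])
      show "continuous_on {\<alpha>..\<alpha> + \<delta>} z" by (rule continuous_on_subset[OF cz]) (use d b al in auto)
      show "continuous_on {\<alpha>..\<alpha> + \<delta>} f" by (rule continuous_on_subset[OF cf]) (use d b al in auto)
      show "z \<alpha> = 0" by (rule za)
      fix s assume s: "\<alpha> < s" "s < \<alpha> + \<delta>"
      have s1: "0 < s" "s < 1" "s < b" using s d b al by auto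
      show "0 < z s" using zpos s s1 by auto
      show "(z has_real_derivative h s - c - D s * g s / z s) (at s)" using dz[of s] s s1 by auto
      show "(f has_real_derivative h s) (at s)" using df s1 by auto
      show "\<bar>h s - c\<bar> \<le> K" using K(2)[of s] s1 by auto
      show "D s \<le> 0" using Dneg[of s] s s1 by auto
      show "\<bar>D s\<bar> \<le> M1 * (s - \<alpha>)" using DlipR[of s] s s1 by auto
      show "\<bar>g s\<bar> \<le> G" using G(2)[of s] s1 by auto
      show "L * (s - \<alpha>) powr \<tau> \<le> e2 * g s" using gr[of s] s d by auto
      show "(X2 has_real_derivative D s / z s) (at s)" using g2 s s1 by (auto simp: goodX_def rr_def)
    qed
    then obtain Bd2 where Bd2: "\<forall>t\<in>{0<..<\<delta>}. Bd2 \<le> - X2 (\<alpha> + t)" by blast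
    have "\<exists>Bd. \<forall>t\<in>{0<..<\<delta>}. Bd \<le> X1 (\<alpha> - t)"
    proof (rule alpha_left[OF d(1,2) Lt(2,3) Lt(1) Lt(5) K(1) M1(1) G(1)])
      show "continuous_on {\<alpha> - \<delta>..\<alpha>} z" by (rule continuous_on_subset[OF cz]) (use d b al in auto)
      show "continuous_on {\<alpha> - \<delta>..\<alpha>} f" by (rule continuous_on_subset[OF cf]) (use d b al in auto)
      show "z \<alpha> = 0" by (rule za)
      fix s assume s: "\<alpha> - \<delta> < s" "s < \<alpha>"
      have s1: "0 < s" "s < 1" "s < b" using s d b al by auto
      show "z s < 0" using zneg s s1 by auto
      show "(z has_real_derivative h s - c - D s * g s / z s) (at s)" using dz[of s] s s1 by auto
      show "(f has_real_derivative h s) (at s)" using df s1 by auto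
      show "\<bar>h s - c\<bar> \<le> K" using K(2)[of s] s1 by auto
      show "D s \<ge> 0" using Dpos[of s] s s1 by auto
      show "\<bar>D s\<bar> \<le> M1 * (\<alpha> - s)" using DlipL[of s] s s1 by auto
      show "\<bar>g s\<bar> \<le> G" using G(2)[of s] s1 by auto
      show "L * (\<alpha> - s) powr \<tau> \<le> e1 * g s" using gl[of s] s d by auto
      show "(X1 has_real_derivative D s / z s) (at s)" using g1 s s1 by (auto simp: goodX_def rr_def)
    qed
    then obtain Bd1 where Bd1: "\<forall>t\<in>{0<..<\<delta>}. Bd1 \<le> X1 (\<alpha> - t)" by blast
    have b1: "\<exists>B. \<forall>u\<in>{0<..<\<alpha>}. B \<le> X1 u"
      by (rule bdd_below_from_local[OF g1 d(1) _ Bd1]) (use d in simp)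
    have b2: "\<exists>B. \<forall>u\<in>{\<alpha><..<b}. X2 u \<le> B"
      by (rule bdd_above_from_local[OF g2 d(1) d(5) Bd2])
    obtain X k1 k2 where X: "goodX 0 b (insert \<alpha> ({} \<union> {})) (rr z) X"
        "\<forall>u\<in>{\<alpha><..<b}. X u = X2 u + k2"
      using glue[OF al(1) b(1) g1 g2 b1 b2] by blast
    then show ?thesis by auto
  qed
  have dz_of: "(z has_real_derivative (h s - c - D s * g s / z s)) (at s)"
    if "C1_ode_on S z h c q" "s \<in> S" for S z s
  proof -
    have "z differentiable (at s)" "deriv z s = h s - c - q s / z s"
      using that by (auto simp: C1_ode_on_def)
    then show ?thesis by (simp add: DERIV_deriv_iff_real_differentiable[symmetric] qdef)
  qed
  from a(17) show ?thesis
  proof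
    assume A: "(\<exists>z. problem_P h c q \<alpha> z) \<and> (\<alpha> \<noteq> \<gamma> \<or> \<alpha> = \<gamma> \<and> cond_G2 g \<gamma>)"
    then obtain z where P: "problem_P h c q \<alpha> z" and cases: "\<alpha> \<noteq> \<gamma> \<or> \<alpha> = \<gamma> \<and> cond_G2 g \<gamma>" by blast
    have cz: "continuous_on {0..1} z" and ode: "C1_ode_on ({0<..<1} - {\<alpha>}) z h c q"
      and zneg: "\<And>s. 0 < s \<Longrightarrow> s < \<alpha> \<Longrightarrow> z s < 0" and zpos: "\<And>s. \<alpha> < s \<Longrightarrow> s < 1 \<Longrightarrow> z s > 0"
      and z0: "z 0 = 0" "z \<alpha> = 0" "z 1 = 0"
      using P by (auto simp: problem_P_def)
    have dz: "\<And>s. 0 < s \<Longrightarrow> s < 1 \<Longrightarrow> s \<noteq> \<alpha> \<Longrightarrow> (z has_real_derivative (h s - c - D s * g s / z s)) (at s)"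
      using dz_of[OF ode] by auto
    obtain X1 where X1: "goodX 0 \<alpha> {} (rr z) X1"
    proof -
      have "\<exists>X. goodX 0 \<alpha> {} (rr z) X"
      proof (rule antideriv_good[OF al(1)])
        fix x assume x: "0 < x" "x < \<alpha>"
        show "isCont (rr z) x" using rr_cont[OF _ _ dz[of x]] x al zneg[OF x] by auto
        show "rr z x < 0" using Dpos[OF x] zneg[OF x] by (simp add: rr_def divide_pos_neg)
      qed
      then show ?thesis using that by blast
    qed
    obtain X2 where X2: "goodX \<alpha> 1 {} (rr z) X2"
    proof -
      have "\<exists>X. goodX \<alpha> 1 {} (rr z) X"
      proof (rule antideriv_good[OF al(2)])
        fix x assume x: "\<alpha> < x" "x < 1"
        show "isCont (rr z) x" using rr_cont[OF _ _ dz[of x]] x al zpos[OF x] by auto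
        show "rr z x < 0" using Dneg[OF x] zpos[OF x] by (simp add: rr_def divide_neg_pos)
      qed
      then show ?thesis using that by blast
    qed
    obtain X k where X: "goodX 0 1 {\<alpha>} (rr z) X"
      using alpha_glue[OF al(2) order.refl cz z0(2) zneg zpos dz X1 X2 cases] by blast
    show ?thesis
    proof (rule build_phi[where z = z and E = "{\<alpha>}" and X = X and h = h])
      show "goodX 0 1 {\<alpha>} (\<lambda>u. D u / z u) X" using X by (simp add: rr_def[abs_def])
      fix u assume u: "u \<in> {0<..<1} - {\<alpha>}"
      then have u': "0 < u" "u < 1" "u \<noteq> \<alpha>" by auto
      have "D u \<noteq> 0" using Dpos[of u] Dneg[of u] u' by (cases "u < \<alpha>") force+
      moreover have "z u \<noteq> 0" using zpos[of u] zneg[of u] u' by (cases "u < \<alpha>") force+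
      ultimately show "(z has_real_derivative h u - c - D u * g u / z u) (at u) \<and>
          (f has_real_derivative h u) (at u) \<and> D u \<noteq> 0 \<and> z u \<noteq> 0"
        using dz[OF u'] df[OF u'(1,2)] by auto
    qed (use z0 g01 cz cf cg in auto)
  next
    assume B: "(\<exists>z. problem_P' h c q \<alpha> \<gamma> z \<and> z \<gamma> = 0) \<and> \<alpha> < \<gamma> \<and> cond_G2 g \<gamma>"
    then obtain z where P: "problem_P' h c q \<alpha> \<gamma> z" and zg: "z \<gamma> = 0" and ag: "\<alpha> < \<gamma>"
      and G2c: "cond_G2 g \<gamma>" by blast
    have cz: "continuous_on {0..1} z" and ode: "C1_ode_on ({0<..<1} - {\<alpha>, \<gamma>}) z h c q"
      and zneg: "\<And>s. 0 < s \<Longrightarrow> s < \<alpha> \<Longrightarrow> z s < 0"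
      and zpos1: "\<And>s. \<alpha> < s \<Longrightarrow> s < \<gamma> \<Longrightarrow> z s > 0"
      and zpos2: "\<And>s. \<gamma> < s \<Longrightarrow> s < 1 \<Longrightarrow> z s > 0"
      and z0: "z 0 = 0" "z \<alpha> = 0" "z 1 = 0"
      using P by (auto simp: problem_P'_def)
    have dz: "\<And>s. 0 < s \<Longrightarrow> s < 1 \<Longrightarrow> s \<noteq> \<alpha> \<Longrightarrow> s \<noteq> \<gamma> \<Longrightarrow>
        (z has_real_derivative (h s - c - D s * g s / z s)) (at s)"
      using dz_of[OF ode] by auto
    obtain X1 where X1: "goodX 0 \<alpha> {} (rr z) X1"
    proof -
      have "\<exists>X. goodX 0 \<alpha> {} (rr z) X"
      proof (rule antideriv_good[OF al(1)])
        fix x assume x: "0 < x" "x < \<alpha>"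
        show "isCont (rr z) x" using rr_cont[OF _ _ dz[of x]] x al ag zneg[OF x] by auto
        show "rr z x < 0" using Dpos[OF x] zneg[OF x] by (simp add: rr_def divide_pos_neg)
      qed
      then show ?thesis using that by blast
    qed
    obtain X2 where X2: "goodX \<alpha> \<gamma> {} (rr z) X2"
    proof -
      have "\<exists>X. goodX \<alpha> \<gamma> {} (rr z) X"
      proof (rule antideriv_good[OF ag])
        fix x assume x: "\<alpha> < x" "x < \<gamma>"
        show "isCont (rr z) x" using rr_cont[OF _ _ dz[of x]] x al ga zpos1[OF x] by auto
        show "rr z x < 0" using Dneg[of x] zpos1[OF x] x ga by (simp add: rr_def divide_neg_pos)
      qed
      then show ?thesis using that by blast
    qed
    obtain X3 where X3: "goodX \<gamma> 1 {} (rr z) X3"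
    proof -
      have "\<exists>X. goodX \<gamma> 1 {} (rr z) X"
      proof (rule antideriv_good[OF ga(2)])
        fix x assume x: "\<gamma> < x" "x < 1"
        show "isCont (rr z) x" using rr_cont[OF _ _ dz[of x]] x ag ga zpos2[OF x] by auto
        show "rr z x < 0" using Dneg[of x] zpos2[OF x] x ag by (simp add: rr_def divide_neg_pos)
      qed
      then show ?thesis using that by blast
    qed
    have dz1: "\<And>s. 0 < s \<Longrightarrow> s < \<gamma> \<Longrightarrow> s \<noteq> \<alpha> \<Longrightarrow> (z has_real_derivative (h s - c - D s * g s / z s)) (at s)"
      using dz ga by auto
    obtain X12 k where X12: "goodX 0 \<gamma> {\<alpha>} (rr z) X12" and X12e: "\<forall>u\<in>{\<alpha><..<\<gamma>}. X12 u = X2 u + k"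
      using alpha_glue[OF ag less_imp_le[OF ga(2)] cz z0(2) zneg zpos1 dz1 X1 X2] ag by blast
    obtain L \<tau> d where G2: "L > 0" "0 < \<tau>" "\<tau> < 1" "d > 0"
        "\<And>u. \<bar>u - \<gamma>\<bar> < d \<Longrightarrow> \<bar>g u\<bar> \<ge> L * \<bar>u - \<gamma>\<bar> powr \<tau>"
      using G2c unfolding cond_G2_def by blast
    have Dg: "D \<gamma> < 0" using Dneg[of \<gamma>] ag ga by auto
    define d0 where "d0 = - D \<gamma> / 2"
    have d0: "d0 > 0" using Dg by (simp add: d0_def)
    obtain dd where dd: "dd > 0" "\<And>s. dist s \<gamma> < dd \<Longrightarrow> dist (D s) (D \<gamma>) < d0"
      using cDat[OF ga, unfolded continuous_at_eps_delta] d0 by blast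
    have Dle: "D s \<le> - d0" if "\<bar>s - \<gamma>\<bar> < dd" for s
    proof -
      have "\<bar>D s - D \<gamma>\<bar> < d0" using dd(2)[of s] that by (simp add: dist_real_def)
      then show ?thesis unfolding d0_def by linarith
    qed
    define dg where "dg = min (min d dd) (min (\<gamma> - \<alpha>) (1 - \<gamma>))"
    have dg: "0 < dg" "dg \<le> 1" "dg \<le> d" "dg \<le> dd" "dg \<le> \<gamma> - \<alpha>" "dg \<le> 1 - \<gamma>"
      using G2(4) dd(1) ag ga by (auto simp: dg_def)
    have "\<exists>Bd. \<forall>t\<in>{0<..<dg}. Bd \<le> - X3 (\<gamma> + t)"
    proof (rule gamma_right[OF dg(1,2) G2(2,3) G2(1) d0 K(1) M0(1)])
      show "continuous_on {\<gamma>..\<gamma> + dg} z" by (rule continuous_on_subset[OF cz]) (use dg ga in auto)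
      show "z \<gamma> = 0" by (rule zg)
      fix s assume s: "\<gamma> < s" "s < \<gamma> + dg"
      have s1: "0 < s" "s < 1" "s \<noteq> \<alpha>" "s \<noteq> \<gamma>" "\<bar>s - \<gamma>\<bar> < d" "\<bar>s - \<gamma>\<bar> < dd"
        using s dg ga ag by auto
      show "0 < z s" using zpos2 s s1 by auto
      show "(z has_real_derivative h s - c - D s * g s / z s) (at s)" using dz[OF s1(1-4)] .
      show "\<bar>h s - c\<bar> \<le> K" using K(2)[of s] s1 by auto
      show "D s \<le> - d0" using Dle[OF s1(6)] .
      show "\<bar>D s\<bar> \<le> M0" using M0(2)[of s] s1 by auto
      have "g s > 0" using gpos[of s] s s1 by auto
      moreover have "\<bar>s - \<gamma>\<bar> = s - \<gamma>" using s by auto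
      ultimately show "L * (s - \<gamma>) powr \<tau> \<le> g s" using G2(5)[OF s1(5)] by simp
      show "(X3 has_real_derivative D s / z s) (at s)" using X3 s s1 by (auto simp: goodX_def rr_def)
    qed
    then obtain Bd3 where Bd3: "\<forall>t\<in>{0<..<dg}. Bd3 \<le> - X3 (\<gamma> + t)" by blast
    have "\<exists>Bd. \<forall>t\<in>{0<..<dg}. Bd \<le> X2 (\<gamma> - t)"
    proof (rule gamma_left[OF dg(1,2) G2(2,3) G2(1) d0 K(1) M0(1)])
      show "continuous_on {\<gamma> - dg..\<gamma>} z" by (rule continuous_on_subset[OF cz]) (use dg ga ag al in auto)
      show "z \<gamma> = 0" by (rule zg)
      fix s assume s: "\<gamma> - dg < s" "s < \<gamma>"
      have s1: "0 < s" "s < 1" "s \<noteq> \<alpha>" "s \<noteq> \<gamma>" "\<bar>s - \<gamma>\<bar> < d" "\<bar>s - \<gamma>\<bar> < dd" "\<alpha> < s"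
        using s dg ga ag al by auto
      show "0 < z s" using zpos1 s s1 by auto
      show "(z has_real_derivative h s - c - D s * g s / z s) (at s)" using dz[OF s1(1-4)] .
      show "\<bar>h s - c\<bar> \<le> K" using K(2)[of s] s1 by auto
      show "D s \<le> - d0" using Dle[OF s1(6)] .
      show "\<bar>D s\<bar> \<le> M0" using M0(2)[of s] s1 by auto
      have "g s < 0" using gneg[of s] s s1 by auto
      moreover have "\<bar>s - \<gamma>\<bar> = \<gamma> - s" using s by auto
      ultimately show "L * (\<gamma> - s) powr \<tau> \<le> - g s" using G2(5)[OF s1(5)] by simp
      show "(X2 has_real_derivative D s / z s) (at s)" using X2 s s1 by (auto simp: goodX_def rr_def)
    qed
    then obtain Bd2 where Bd2: "\<forall>t\<in>{0<..<dg}. Bd2 \<le> X2 (\<gamma> - t)" by blast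
    have loc12: "\<forall>t\<in>{0<..<dg}. Bd2 + k \<le> X12 (\<gamma> - t)"
    proof
      fix t assume t: "t \<in> {0<..<dg}"
      then have "\<gamma> - t \<in> {\<alpha><..<\<gamma>}" using dg by auto
      then show "Bd2 + k \<le> X12 (\<gamma> - t)" using X12e Bd2 t by auto
    qed
    have b12: "\<exists>B. \<forall>u\<in>{0<..<\<gamma>}. B \<le> X12 u"
      by (rule bdd_below_from_local[OF X12 dg(1) _ loc12]) (use dg ag al in simp)
    have b3: "\<exists>B. \<forall>u\<in>{\<gamma><..<1}. X3 u \<le> B"
      by (rule bdd_above_from_local[OF X3 dg(1) dg(6) Bd3])
    obtain X k1 k2 where X: "goodX 0 1 (insert \<gamma> ({\<alpha>} \<union> {})) (rr z) X"
      using glue[OF ga(1) ga(2) X12 X3 b12 b3] by blast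
    show ?thesis
    proof (rule build_phi[where z = z and E = "{\<gamma>, \<alpha>}" and X = X and h = h])
      show "goodX 0 1 {\<gamma>, \<alpha>} (\<lambda>u. D u / z u) X" using X by (simp add: rr_def[abs_def])
      fix u assume u: "u \<in> {0<..<1} - {\<gamma>, \<alpha>}"
      then have u': "0 < u" "u < 1" "u \<noteq> \<alpha>" "u \<noteq> \<gamma>" by auto
      have "D u \<noteq> 0" using Dpos[of u] Dneg[of u] u' by (cases "u < \<alpha>") force+
      moreover have "z u \<noteq> 0" using zpos1[of u] zpos2[of u] zneg[of u] u' ag
        by (cases "u < \<alpha>"; cases "u < \<gamma>") force+
      ultimately show "(z has_real_derivative h u - c - D u * g u / z u) (at u) \<and>
          (f has_real_derivative h u) (at u) \<and> D u \<noteq> 0 \<and> z u \<noteq> 0"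
        using dz[OF u'] df[OF u'(1,2)] by auto
    qed (use z0 g01 cz cf cg in auto)
  qed
qed


end
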